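(* Let $\Omega\subset\mathbb{R}^n$, $n\geq2$, be a bounded Lipschitz domain of diameter at most $R_m$. Let $k\geq0$ and $0\leq\alpha\leq1$. Let $\varphi\in C^\alpha(\overline\Omega)$ and $u\in H^2_0(\Omega)$ satisfy $(\Delta+k^2)u=\varphi$ in $\Omega$. Then \[ \sup_{\partial\Omega}|\varphi|\leq C\big(\operatorname{diam}(\Omega)\big)^\alpha\|\varphi\|_{C^\alpha(\overline\Omega)} \] for a finite positive constant $C=C(n,R_m,k)$ depending only on $n,R_m,k$.
   Context: $\|\cdot\|_{C^\alpha}$ denotes the standard Hölder norm. Standing assumption: bounded domains satisfy $H^2_0(\Omega)=\{u|_\Omega: u\in H^2(\mathbb{R}^n),\ u=0 \text{ in } \mathbb{R}^n\setminus\overline\Omega\}$. *)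

theory Defs
  imports "HOL-Analysis.Analysis"
begin

definition pd :: "'n::finite \<Rightarrow> (real^'n \<Rightarrow> real) \<Rightarrow> real^'n \<Rightarrow> real" where
  "pd i f x = deriv (\<lambda>t. f (x + t *\<^sub>R axis i 1)) 0"

fun iter_pd :: "'n::finite list \<Rightarrow> (real^'n \<Rightarrow> real) \<Rightarrow> real^'n \<Rightarrow> real" where
  "iter_pd [] f = f"
| "iter_pd (i # is) f = pd i (iter_pd is f)"

definition smooth_fun :: "(real^'n::finite \<Rightarrow> real) \<Rightarrow> bool" where
  "smooth_fun f \<longleftrightarrow>
     (\<forall>is. continuous_on UNIV (iter_pd is f)) \<and>
     (\<forall>is i x. (\<lambda>t. iter_pd is f (x + t *\<^sub>R axis i 1)) differentiable (at 0))"

definition supp :: "(real^'n::finite \<Rightarrow> real) \<Rightarrow> (real^'n) set" where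
  "supp f = closure {x. f x \<noteq> 0}"

definition test_fun :: "(real^'n::finite \<Rightarrow> real) \<Rightarrow> bool" where
  "test_fun f \<longleftrightarrow> smooth_fun f \<and> compact (supp f)"

definition L2 :: "(real^'n::finite \<Rightarrow> complex) \<Rightarrow> bool" where
  "L2 u \<longleftrightarrow> u \<in> borel_measurable lborel \<and> integrable lborel (\<lambda>x. (cmod (u x))\<^sup>2)"

definition weak_pd :: "'n::finite \<Rightarrow> (real^'n \<Rightarrow> complex) \<Rightarrow> (real^'n \<Rightarrow> complex) \<Rightarrow> bool" where
  "weak_pd i u g \<longleftrightarrow> (\<forall>\<psi>. test_fun \<psi> \<longrightarrow>
     (\<integral>x. u x * of_real (pd i \<psi> x) \<partial>lborel) = - (\<integral>x. g x * of_real (\<psi> x) \<partial>lborel))"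

definition weak_pd2 :: "'n::finite \<Rightarrow> 'n \<Rightarrow> (real^'n \<Rightarrow> complex) \<Rightarrow> (real^'n \<Rightarrow> complex) \<Rightarrow> bool" where
  "weak_pd2 i j u h \<longleftrightarrow> (\<forall>\<psi>. test_fun \<psi> \<longrightarrow>
     (\<integral>x. u x * of_real (pd i (pd j \<psi>) x) \<partial>lborel) = (\<integral>x. h x * of_real (\<psi> x) \<partial>lborel))"

definition H2 :: "(real^'n::finite \<Rightarrow> complex) \<Rightarrow> bool" where
  "H2 u \<longleftrightarrow> L2 u \<and> (\<forall>i. \<exists>g. L2 g \<and> weak_pd i u g) \<and> (\<forall>i j. \<exists>h. L2 h \<and> weak_pd2 i j u h)"

text \<open>H^2_0(Omega) as in the standing assumption: H^2(R^n) functions vanishing outside closure Omega.\<close>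
definition H2_0 :: "(real^'n::finite) set \<Rightarrow> (real^'n \<Rightarrow> complex) \<Rightarrow> bool" where
  "H2_0 \<Omega> u \<longleftrightarrow> H2 u \<and> (AE x in lborel. x \<notin> closure \<Omega> \<longrightarrow> u x = 0)"

definition helmholtz_eq :: "(real^'n::finite) set \<Rightarrow> real \<Rightarrow> (real^'n \<Rightarrow> complex) \<Rightarrow> (real^'n \<Rightarrow> complex) \<Rightarrow> bool" where
  "helmholtz_eq \<Omega> k u \<phi> \<longleftrightarrow> (\<forall>\<psi>. test_fun \<psi> \<and> supp \<psi> \<subseteq> \<Omega> \<longrightarrow>
     (\<integral>x. u x * of_real ((\<Sum>i\<in>UNIV. pd i (pd i \<psi>) x) + k\<^sup>2 * \<psi> x) \<partial>lborel)
       = (\<integral>x. \<phi> x * of_real (\<psi> x) \<partial>lborel))"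

text \<open>Bounded Lipschitz domain: nonempty open connected set whose boundary is locally,
  in suitably rotated coordinates (direction e), the graph of a Lipschitz function,
  with Omega lying on one side.\<close>
definition lipschitz_domain :: "(real^'n::finite) set \<Rightarrow> bool" where
  "lipschitz_domain \<Omega> \<longleftrightarrow> open \<Omega> \<and> connected \<Omega> \<and> \<Omega> \<noteq> {} \<and>
     (\<forall>x0\<in>frontier \<Omega>. \<exists>r>0. \<exists>e. norm e = 1 \<and> (\<exists>\<gamma> L. L-lipschitz_on UNIV \<gamma> \<and>
        \<Omega> \<inter> ball x0 r = {x \<in> ball x0 r. x \<bullet> e > \<gamma> (x - (x \<bullet> e) *\<^sub>R e)}))"

definition holder_seminorm :: "real \<Rightarrow> (real^'n::finite) set \<Rightarrow> (real^'n \<Rightarrow> complex) \<Rightarrow> real" where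
  "holder_seminorm \<alpha> S f = Sup {cmod (f x - f y) / (dist x y powr \<alpha>) | x y. x \<in> S \<and> y \<in> S \<and> x \<noteq> y}"

definition holder_space :: "real \<Rightarrow> (real^'n::finite) set \<Rightarrow> (real^'n \<Rightarrow> complex) \<Rightarrow> bool" where
  "holder_space \<alpha> S f \<longleftrightarrow> continuous_on S f \<and> bounded (f ` S) \<and>
     bdd_above {cmod (f x - f y) / (dist x y powr \<alpha>) | x y. x \<in> S \<and> y \<in> S \<and> x \<noteq> y}"

definition holder_norm :: "real \<Rightarrow> (real^'n::finite) set \<Rightarrow> (real^'n \<Rightarrow> complex) \<Rightarrow> real" where
  "holder_norm \<alpha> S f = Sup ((\<lambda>x. cmod (f x)) ` S) + holder_seminorm \<alpha> S f"

end

theory Submission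
  imports Defs "HOL-Computational_Algebra.Polynomial"
begin


definition closedS :: "((real^'n::finite) \<Rightarrow> real) set \<Rightarrow> bool" where
  "closedS S \<longleftrightarrow> (\<forall>f\<in>S. continuous_on UNIV f \<and>
     (\<forall>i x. (\<lambda>t. f (x + t *\<^sub>R axis i 1)) differentiable (at 0)) \<and> (\<forall>i. pd i f \<in> S))"

lemma closedS_iter: "closedS S \<Longrightarrow> f \<in> S \<Longrightarrow> iter_pd is f \<in> S"
  by (induction "is") (auto simp: closedS_def)

lemma closedS_smooth: "closedS S \<Longrightarrow> f \<in> S \<Longrightarrow> smooth_fun f"
proof -
  assume a: "closedS S" "f \<in> S"
  have "\<And>is. iter_pd is f \<in> S" using closedS_iter a by blast
  with a(1) show ?thesis unfolding smooth_fun_def closedS_def by blast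
qed

lemma iter_pd_append: "iter_pd (is @ [i]) f = iter_pd is (pd i f)"
  by (induction "is") auto

lemma smooth_pd: "smooth_fun f \<Longrightarrow> smooth_fun (pd i f)"
  unfolding smooth_fun_def by (metis iter_pd_append)

lemma smooth_cont: "smooth_fun f \<Longrightarrow> continuous_on UNIV f"
  unfolding smooth_fun_def by (metis iter_pd.simps(1))

lemma smooth_ldiff: "smooth_fun f \<Longrightarrow> (\<lambda>t. f (x + t *\<^sub>R axis i 1)) differentiable (at 0)"
  unfolding smooth_fun_def by (metis iter_pd.simps(1))

lemma pd_eqI: "((\<lambda>t. f (x + t *\<^sub>R axis i 1)) has_field_derivative D) (at 0) \<Longrightarrow> pd i f x = D"
  unfolding pd_def by (rule DERIV_imp_deriv)

lemma smooth_deriv: "smooth_fun f \<Longrightarrow> ((\<lambda>t. f (x + t *\<^sub>R axis i 1)) has_field_derivative pd i f x) (at 0)"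
  unfolding pd_def using smooth_ldiff DERIV_deriv_iff_real_differentiable by blast

fun prodsum :: "((real^'n::finite \<Rightarrow> real) \<times> (real^'n \<Rightarrow> real)) list \<Rightarrow> real^'n \<Rightarrow> real" where
  "prodsum [] = (\<lambda>x. 0)"
| "prodsum ((a,b)#ps) = (\<lambda>x. a x * b x + prodsum ps x)"

fun pdlist :: "'n::finite \<Rightarrow> ((real^'n \<Rightarrow> real) \<times> (real^'n \<Rightarrow> real)) list \<Rightarrow> ((real^'n \<Rightarrow> real) \<times> (real^'n \<Rightarrow> real)) list" where
  "pdlist i [] = []"
| "pdlist i ((a,b)#ps) = (pd i a, b) # (a, pd i b) # pdlist i ps"

lemma prodsum_props:
  assumes "\<forall>(a,b)\<in>set ps. smooth_fun a \<and> smooth_fun b"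
  shows "continuous_on UNIV (prodsum ps) \<and>
         ((\<lambda>t. prodsum ps (x + t *\<^sub>R axis i 1)) has_field_derivative prodsum (pdlist i ps) x) (at 0)"
  using assms
proof (induction ps)
  case Nil
  then show ?case by (auto intro: continuous_intros)
next
  case (Cons p ps)
  obtain a b where p: "p = (a,b)" by force
  have sa: "smooth_fun a" and sb: "smooth_fun b" using Cons.prems p by auto
  have IH: "continuous_on UNIV (prodsum ps) \<and>
         ((\<lambda>t. prodsum ps (x + t *\<^sub>R axis i 1)) has_field_derivative prodsum (pdlist i ps) x) (at 0)"
    using Cons by auto
  have c: "continuous_on UNIV (prodsum (p#ps))"
    using IH smooth_cont[OF sa] smooth_cont[OF sb] unfolding p
    by (auto intro!: continuous_intros)
  have d: "((\<lambda>t. a (x + t *\<^sub>R axis i 1) * b (x + t *\<^sub>R axis i 1) + prodsum ps (x + t *\<^sub>R axis i 1))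
     has_field_derivative (pd i a x * b (x + 0 *\<^sub>R axis i 1) + pd i b x * a (x + 0 *\<^sub>R axis i 1)) + prodsum (pdlist i ps) x) (at 0)"
    by (intro DERIV_add DERIV_mult smooth_deriv sa sb IH[THEN conjunct2])
  show ?case using c d unfolding p by (simp add: algebra_simps)
qed

lemma prodsum_smooth:
  assumes "\<forall>(a,b)\<in>set ps. smooth_fun a \<and> smooth_fun b"
  shows "smooth_fun (prodsum ps)"
proof -
  let ?S = "{h. \<exists>ps. (\<forall>(a,b)\<in>set ps. smooth_fun a \<and> smooth_fun b) \<and> h = prodsum ps}"
  have "closedS ?S"
    unfolding closedS_def
  proof (intro ballI conjI allI)
    fix h assume "h \<in> ?S"
    then obtain ps where ps: "\<forall>(a,b)\<in>set ps. smooth_fun a \<and> smooth_fun b" and h: "h = prodsum ps" by blast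
    show "continuous_on UNIV h" using prodsum_props[OF ps] h by blast
    fix i x
    show "(\<lambda>t. h (x + t *\<^sub>R axis i 1)) differentiable (at 0)"
      using prodsum_props[OF ps, of x i] h real_differentiable_def by blast
  next
    fix h i assume "h \<in> ?S"
    then obtain ps where ps: "\<forall>(a,b)\<in>set ps. smooth_fun a \<and> smooth_fun b" and h: "h = prodsum ps" by blast
    have "pd i h = prodsum (pdlist i ps)"
      using prodsum_props[OF ps] pd_eqI h by blast
    moreover have "\<forall>(a,b)\<in>set (pdlist i ps). smooth_fun a \<and> smooth_fun b"
      using ps by (induction ps rule: pdlist.induct) (auto intro: smooth_pd)
    ultimately show "pd i h \<in> ?S" by blast
  qed
  then show ?thesis using closedS_smooth assms by blast
qed

lemma smooth_const: "smooth_fun (\<lambda>x. c)"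
proof -
  have "closedS {\<lambda>x. c | c. True}"
    unfolding closedS_def
  proof (intro ballI conjI allI)
    fix h :: "real^'n \<Rightarrow> real" assume "h \<in> {\<lambda>x. c | c. True}"
    then obtain c where h: "h = (\<lambda>x. c)" by blast
    show "continuous_on UNIV h" unfolding h by (rule continuous_on_const)
    fix i x show "(\<lambda>t. h (x + t *\<^sub>R axis i 1)) differentiable (at 0)" unfolding h by simp
  next
    fix h :: "real^'n \<Rightarrow> real" and i assume "h \<in> {\<lambda>x. c | c. True}"
    then obtain c where h: "h = (\<lambda>x. c)" by blast
    have "pd i h = (\<lambda>x. 0)"
    proof
      fix x show "pd i h x = 0" unfolding h by (rule pd_eqI) simp
    qed
    then show "pd i h \<in> {\<lambda>x. c | c. True}" by blast
  qed
  then show ?thesis using closedS_smooth by blast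
qed

lemma smooth_mult: "smooth_fun f \<Longrightarrow> smooth_fun g \<Longrightarrow> smooth_fun (\<lambda>x. f x * g x)"
  using prodsum_smooth[of "[(f,g)]"] by auto

lemma smooth_add: "smooth_fun f \<Longrightarrow> smooth_fun g \<Longrightarrow> smooth_fun (\<lambda>x. f x + g x)"
  using prodsum_smooth[of "[(f,\<lambda>x. 1),(g,\<lambda>x. 1)]"] smooth_const by auto

lemma smooth_cmult: "smooth_fun f \<Longrightarrow> smooth_fun (\<lambda>x. c * f x)"
  using smooth_mult[OF smooth_const] by blast

lemma smooth_diff: "smooth_fun f \<Longrightarrow> smooth_fun g \<Longrightarrow> smooth_fun (\<lambda>x. f x - g x)"
  using smooth_add[OF _ smooth_cmult[of g "-1"]] by auto

lemma smooth_power: "smooth_fun f \<Longrightarrow> smooth_fun (\<lambda>x. f x ^ m)"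
  by (induction m) (auto intro: smooth_mult smooth_const)

lemma smooth_prod: "finite I \<Longrightarrow> (\<And>j. j \<in> I \<Longrightarrow> smooth_fun (f j)) \<Longrightarrow> smooth_fun (\<lambda>x. \<Prod>j\<in>I. f j x)"
  by (induction I rule: finite_induct) (auto intro: smooth_mult smooth_const)


lemma smooth_divpow:
  assumes g: "smooth_fun g" and nz: "\<And>x. g x \<noteq> 0"
  shows "smooth_fun a \<Longrightarrow> smooth_fun (\<lambda>x. a x / g x ^ m)"
proof -
  let ?S = "{h. \<exists>a m. smooth_fun a \<and> h = (\<lambda>x. a x / g x ^ m)}"
  have "closedS ?S"
    unfolding closedS_def
  proof (intro ballI conjI allI)
    fix h assume "h \<in> ?S"
    then obtain a m where a: "smooth_fun a" and h: "h = (\<lambda>x. a x / g x ^ m)" by blast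
    have "continuous_on UNIV (\<lambda>x. a x / g x ^ m)"
      using smooth_cont[OF a] smooth_cont[OF g] nz by (intro continuous_intros) auto
    then show "continuous_on UNIV h" unfolding h .
    fix i x
    have "((\<lambda>t. a (x + t *\<^sub>R axis i 1) / g (x + t *\<^sub>R axis i 1) ^ m) has_field_derivative
       (pd i a x * g (x + 0 *\<^sub>R axis i 1) ^ m - a (x + 0 *\<^sub>R axis i 1) * (of_nat m * (pd i g x * g (x + 0 *\<^sub>R axis i 1) ^ (m - Suc 0))))
        / (g (x + 0 *\<^sub>R axis i 1) ^ m * g (x + 0 *\<^sub>R axis i 1) ^ m)) (at 0)"
      by (intro DERIV_divide DERIV_power smooth_deriv a g) (simp add: nz)
    then show "(\<lambda>t. h (x + t *\<^sub>R axis i 1)) differentiable (at 0)"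
      unfolding h using real_differentiable_def by blast
  next
    fix h i assume "h \<in> ?S"
    then obtain a m where a: "smooth_fun a" and h: "h = (\<lambda>x. a x / g x ^ m)" by blast
    have "pd i h x = (pd i a x * g x - of_nat m * a x * pd i g x) / g x ^ (Suc m)" for x
    proof -
      have D: "((\<lambda>t. a (x + t *\<^sub>R axis i 1) / g (x + t *\<^sub>R axis i 1) ^ m) has_field_derivative
       (pd i a x * g (x + 0 *\<^sub>R axis i 1) ^ m - a (x + 0 *\<^sub>R axis i 1) * (of_nat m * (pd i g x * g (x + 0 *\<^sub>R axis i 1) ^ (m - Suc 0))))
        / (g (x + 0 *\<^sub>R axis i 1) ^ m * g (x + 0 *\<^sub>R axis i 1) ^ m)) (at 0)"
        by (intro DERIV_divide DERIV_power smooth_deriv a g) (simp add: nz)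
      have e: "(pd i a x * g x ^ m - a x * (of_nat m * (pd i g x * g x ^ (m - Suc 0)))) / (g x ^ m * g x ^ m)
          = (pd i a x * g x - of_nat m * a x * pd i g x) / g x ^ (Suc m)"
      proof (cases m)
        case 0 then show ?thesis using nz[of x] by (simp add: field_simps)
      next
        case (Suc n) then show ?thesis using nz[of x] by (simp add: field_simps)
      qed
      show ?thesis unfolding h using pd_eqI[OF D] e by simp
    qed
    moreover have "smooth_fun (\<lambda>x. pd i a x * g x - of_nat m * a x * pd i g x)"
      by (intro smooth_diff smooth_mult smooth_cmult smooth_pd a g)
    ultimately show "pd i h \<in> ?S" by blast
  qed
  then show "smooth_fun a \<Longrightarrow> smooth_fun (\<lambda>x. a x / g x ^ m)" using closedS_smooth by blast
qed

lemma smooth_div: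
  assumes "smooth_fun a" "smooth_fun g" "\<And>x. g x \<noteq> 0"
  shows "smooth_fun (\<lambda>x. a x / g x)"
  using smooth_divpow[OF assms(2,3) assms(1), of 1] by simp

definition closed1 :: "(real \<Rightarrow> real) set \<Rightarrow> bool" where
  "closed1 T \<longleftrightarrow> (\<forall>h\<in>T. (\<forall>t. h differentiable (at t)) \<and> deriv h \<in> T)"

lemma smooth_comp1:
  assumes T: "closed1 T" and hT: "h \<in> T"
  shows "smooth_fun (\<lambda>x::real^'n::finite. c * h (s * x $ j + d))"
proof -
  let ?S = "{f. \<exists>h c s d j. h \<in> T \<and> f = (\<lambda>x::real^'n. c * h (s * x $ j + d))}"
  have "closedS ?S"
    unfolding closedS_def
  proof (intro ballI conjI allI)
    fix f assume "f \<in> ?S"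
    then obtain h c s d j where h: "h \<in> T" and f: "f = (\<lambda>x::real^'n. c * h (s * x $ j + d))" by blast
    have ch: "continuous_on UNIV h"
      using T h unfolding closed1_def
      by (meson continuous_at_imp_continuous_on differentiable_imp_continuous_within)
    have "continuous_on UNIV (\<lambda>x::real^'n. s * x $ j + d)"
      by (intro continuous_intros)
    then have "continuous_on UNIV (\<lambda>x::real^'n. h (s * x $ j + d))"
      using continuous_on_compose2[OF ch] by blast
    then show "continuous_on UNIV f" unfolding f by (intro continuous_intros)
    fix i x
    have "((\<lambda>t. c * h (s * (x + t *\<^sub>R axis i 1) $ j + d)) has_field_derivative
        c * (deriv h (s * (x + 0 *\<^sub>R axis i 1) $ j + d) * (s * (if j = i then 1 else 0)))) (at 0)"
    proof (intro DERIV_cmult DERIV_chain2[where f=h])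
      show "(h has_field_derivative deriv h (s * (x + 0 *\<^sub>R axis i 1) $ j + d)) (at (s * (x + 0 *\<^sub>R axis i 1) $ j + d))"
        using T h unfolding closed1_def using DERIV_deriv_iff_real_differentiable by blast
      have "(\<lambda>t. s * (x + t *\<^sub>R axis i 1) $ j + d) = (\<lambda>t. (s * x $ j + d) + t * (s * (if j = i then 1 else 0)))"
        by (auto simp: axis_def algebra_simps)
      then show "((\<lambda>t. s * (x + t *\<^sub>R axis i 1) $ j + d) has_field_derivative s * (if j = i then 1 else 0)) (at 0)"
        by (auto intro!: derivative_eq_intros)
    qed
    then show "(\<lambda>t. f (x + t *\<^sub>R axis i 1)) differentiable (at 0)"
      unfolding f using real_differentiable_def by blast
  next
    fix f i assume "f \<in> ?S"
    then obtain h c s d j where h: "h \<in> T" and f: "f = (\<lambda>x::real^'n. c * h (s * x $ j + d))" by blast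
    have "pd i f x = (c * (s * (if j = i then 1 else 0))) * deriv h (s * x $ j + d)" for x
    proof -
      have "((\<lambda>t. c * h (s * (x + t *\<^sub>R axis i 1) $ j + d)) has_field_derivative
          c * (deriv h (s * (x + 0 *\<^sub>R axis i 1) $ j + d) * (s * (if j = i then 1 else 0)))) (at 0)"
      proof (intro DERIV_cmult DERIV_chain2[where f=h])
        show "(h has_field_derivative deriv h (s * (x + 0 *\<^sub>R axis i 1) $ j + d)) (at (s * (x + 0 *\<^sub>R axis i 1) $ j + d))"
          using T h unfolding closed1_def using DERIV_deriv_iff_real_differentiable by blast
        have "(\<lambda>t. s * (x + t *\<^sub>R axis i 1) $ j + d) = (\<lambda>t. (s * x $ j + d) + t * (s * (if j = i then 1 else 0)))"
          by (auto simp: axis_def algebra_simps)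
        then show "((\<lambda>t. s * (x + t *\<^sub>R axis i 1) $ j + d) has_field_derivative s * (if j = i then 1 else 0)) (at 0)"
          by (auto intro!: derivative_eq_intros)
      qed
      from pd_eqI[OF this] show ?thesis unfolding f by simp
    qed
    moreover have "deriv h \<in> T" using T h unfolding closed1_def by blast
    ultimately show "pd i f \<in> ?S" by blast
  qed
  then show ?thesis using closedS_smooth hT by blast
qed

lemma pd_local:
  assumes V: "open V" "x \<in> V" and eq: "\<And>y. y \<in> V \<Longrightarrow> f y = g y"
  shows "pd i f x = pd i g x"
proof -
  obtain r where r: "r > 0" "ball x r \<subseteq> V" using V openE by blast
  have "eventually (\<lambda>t. f (x + t *\<^sub>R axis i 1) = g (x + t *\<^sub>R axis i 1)) (nhds 0)"
    unfolding eventually_nhds_metric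
  proof (intro exI conjI allI impI)
    show "r > 0" by fact
    fix t :: real assume "dist t 0 < r"
    then have "x + t *\<^sub>R axis i 1 \<in> ball x r" by (simp add: dist_norm)
    then show "f (x + t *\<^sub>R axis i 1) = g (x + t *\<^sub>R axis i 1)" using r eq by blast
  qed
  then show ?thesis unfolding pd_def by (rule deriv_cong_ev) simp
qed

lemma pd_zero_outside:
  assumes "closed S" "\<And>y. y \<notin> S \<Longrightarrow> f y = 0" "x \<notin> S"
  shows "pd i f x = 0"
proof -
  have "pd i f x = pd i (\<lambda>y. 0) x"
    by (rule pd_local[of "- S"]) (use assms in auto)
  also have "\<dots> = 0" by (rule pd_eqI) simp
  finally show ?thesis .
qed


definition eb :: "real poly \<Rightarrow> real \<Rightarrow> real" where
  "eb p t = (if 0 < t then poly p (inverse t) * exp (- inverse t) else 0)"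

lemma poly_exp_lim: "((\<lambda>s::real. poly (p::real poly) s * exp (- s)) \<longlongrightarrow> 0) at_top"
proof -
  have "((\<lambda>s. \<Sum>i\<le>degree p. coeff p i * (s ^ i / exp s)) \<longlongrightarrow> (\<Sum>i\<le>degree p. coeff p i * 0)) at_top"
    by (intro tendsto_sum tendsto_mult tendsto_const tendsto_power_div_exp_0)
  moreover have "(\<lambda>s. \<Sum>i\<le>degree p. coeff p i * (s ^ i / exp s)) = (\<lambda>s. poly p s * exp (- s))"
    by (simp add: poly_altdef exp_minus sum_distrib_right divide_inverse mult.assoc)
  ultimately show ?thesis by simp
qed

lemma eb_deriv: "(eb p has_field_derivative eb ([:0,0,1:] * (p - pderiv p)) t) (at t)"
proof (cases "t = 0")
  case True
  have L: "((\<lambda>y. (eb p y - eb p 0) / (y - 0)) \<longlongrightarrow> 0) (at_left 0)"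
  proof (rule tendsto_eventually)
    show "\<forall>\<^sub>F y in at_left 0. (eb p y - eb p 0) / (y - 0) = (0::real)"
      unfolding eventually_at_left_field by (auto simp: eb_def intro!: exI[of _ "-1"])
  qed
  have "((\<lambda>y. poly (pCons 0 p) (inverse y) * exp (- inverse y)) \<longlongrightarrow> 0) (at_right 0)"
    using filterlim_compose[OF poly_exp_lim filterlim_inverse_at_top_right] .
  moreover have "\<forall>\<^sub>F y in at_right 0. poly (pCons 0 p) (inverse y) * exp (- inverse y) = (eb p y - eb p 0) / (y - 0)"
    unfolding eventually_at_right_field
    by (auto simp: eb_def divide_inverse intro!: exI[of _ 1])
  ultimately have R: "((\<lambda>y. (eb p y - eb p 0) / (y - 0)) \<longlongrightarrow> 0) (at_right 0)"
    by (rule Lim_transform_eventually)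
  have "((\<lambda>y. (eb p y - eb p 0) / (y - 0)) \<longlongrightarrow> 0) (at 0)"
    using L R by (rule filterlim_split_at)
  then show ?thesis using True by (simp add: has_field_derivative_iff eb_def)
next
  case False
  show ?thesis
  proof (cases "t > 0")
    case True
    have ev: "\<forall>\<^sub>F y in nhds t. eb p y = poly p (inverse y) * exp (- inverse y)"
      using eventually_nhds_in_open[of "{0<..}" t] True
      by (auto simp: eb_def elim!: eventually_mono)
    have D: "((\<lambda>y. poly p (inverse y) * exp (- inverse y)) has_field_derivative
        (poly (pderiv p) (inverse t) * (- (inverse t ^ Suc (Suc 0)))) * exp (- inverse t)
         + (exp (- inverse t) * (- (- (inverse t ^ Suc (Suc 0))))) * poly p (inverse t)) (at t)"
      by (intro DERIV_mult DERIV_chain2[OF poly_DERIV] DERIV_chain2[OF DERIV_exp] DERIV_minus DERIV_inverse)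
         (use True in auto)
    have "(poly (pderiv p) (inverse t) * (- (inverse t ^ Suc (Suc 0)))) * exp (- inverse t)
         + (exp (- inverse t) * (- (- (inverse t ^ Suc (Suc 0))))) * poly p (inverse t)
       = eb ([:0,0,1:] * (p - pderiv p)) t"
      using True by (simp add: eb_def poly_pCons algebra_simps power2_eq_square)
    with D have "((\<lambda>y. poly p (inverse y) * exp (- inverse y)) has_field_derivative eb ([:0,0,1:] * (p - pderiv p)) t) (at t)"
      by simp
    then show ?thesis using DERIV_cong_ev[OF refl ev refl] by blast
  next
    case False
    with \<open>t \<noteq> 0\<close> have tn: "t < 0" by simp
    have ev: "\<forall>\<^sub>F y in nhds t. eb p y = 0"
      using eventually_nhds_in_open[of "{..<0}" t] tn
      by (auto simp: eb_def elim!: eventually_mono)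
    have "((\<lambda>y. 0::real) has_field_derivative eb ([:0,0,1:] * (p - pderiv p)) t) (at t)"
      using tn by (simp add: eb_def)
    then show ?thesis using DERIV_cong_ev[OF refl ev refl] by blast
  qed
qed

lemma closed1_eb: "closed1 {eb p | p. True}"
  unfolding closed1_def
proof (intro ballI conjI allI)
  fix h assume "h \<in> {eb p | p. True}"
  then obtain p where h: "h = eb p" by blast
  show "h differentiable (at t)" for t
    unfolding h using eb_deriv real_differentiable_def by blast
  have "deriv h = eb ([:0,0,1:] * (p - pderiv p))"
    unfolding h using eb_deriv DERIV_imp_deriv by blast
  then show "deriv h \<in> {eb p | p. True}" by blast
qed

lemma closed1_cos: "closed1 {\<lambda>t. cos (t + th) | th::real. True}"
  unfolding closed1_def
proof (intro ballI conjI allI)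
  fix h :: "real \<Rightarrow> real" assume "h \<in> {\<lambda>t. cos (t + th) | th. True}"
  then obtain th where h: "h = (\<lambda>t. cos (t + th))" by blast
  have D: "(h has_field_derivative cos (t + (th + pi/2))) (at t)" for t
  proof -
    have "(h has_field_derivative - sin (t + th)) (at t)"
      unfolding h by (auto intro!: derivative_eq_intros)
    then show ?thesis using minus_sin_cos_eq[of "t + th"] by (simp add: add.assoc)
  qed
  show "h differentiable (at t)" for t
    using D real_differentiable_def by blast
  have "deriv h = (\<lambda>t. cos (t + (th + pi/2)))"
    using D DERIV_imp_deriv by blast
  then show "deriv h \<in> {\<lambda>t. cos (t + th) | th. True}" by blast
qed

lemma smooth_eb: "smooth_fun (\<lambda>x::real^'n::finite. c * eb p (s * x $ j + d))"
  using smooth_comp1[OF closed1_eb] by blast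

lemma smooth_cos: "smooth_fun (\<lambda>x::real^'n::finite. c * cos (s * x $ j + d))"
proof -
  have "(\<lambda>t. cos (t + 0)) \<in> {\<lambda>t. cos (t + th) | th::real. True}" by blast
  from smooth_comp1[OF closed1_cos this] show ?thesis by simp
qed

lemma eb1: "eb 1 t = (if 0 < t then exp (- inverse t) else 0)"
  by (simp add: eb_def)


lemma eb1_nonneg: "0 \<le> eb 1 t" and eb1_le1: "eb 1 t \<le> 1" and eb1_pos: "eb 1 t > 0 \<longleftrightarrow> t > 0"
  by (auto simp: eb1)

lemma smooth_eb1: "smooth_fun (\<lambda>x::real^'n::finite. eb 1 (s * x $ j + d))"
  using smooth_eb[of 1 1 s j d] by simp

lemma test_funI:
  assumes "smooth_fun f" "compact K" "\<And>x. f x \<noteq> 0 \<Longrightarrow> x \<in> K"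
  shows "test_fun f" "supp f \<subseteq> K"
proof -
  have cK: "closed K" using assms(2) by (rule compact_imp_closed)
  have "{x. f x \<noteq> 0} \<subseteq> K" using assms(3) by blast
  then show sK: "supp f \<subseteq> K" unfolding supp_def by (rule closure_minimal) (rule cK)
  have "closed (supp f)" unfolding supp_def by (rule closed_closure)
  then have "compact (K \<inter> supp f)" by (rule compact_Int_closed[OF assms(2)])
  moreover have "K \<inter> supp f = supp f" using sK by (rule Int_absorb1)
  ultimately have "compact (supp f)" by simp
  then show "test_fun f" unfolding test_fun_def using assms(1) by (rule conjI[rotated])
qed

definition bbump :: "real^'n::finite \<Rightarrow> real^'n \<Rightarrow> real^'n \<Rightarrow> real" where
  "bbump a b x = (\<Prod>j\<in>UNIV. eb 1 (1 * x $ j + - (a $ j)) * eb 1 ((-1) * x $ j + b $ j))"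

lemma bbump_smooth: "smooth_fun (bbump a b)"
  unfolding bbump_def
  by (rule smooth_prod) (simp, rule smooth_mult[OF smooth_eb1 smooth_eb1])

lemma bbump_range: "0 \<le> bbump a b x" "bbump a b x \<le> 1"
  unfolding bbump_def
  by (auto intro!: prod_nonneg prod_le_1 mult_nonneg_nonneg mult_le_one eb1_nonneg eb1_le1)

lemma bbump_pos: "bbump a b x > 0 \<longleftrightarrow> x \<in> box a b"
proof
  assume "bbump a b x > 0"
  then have "\<forall>j. eb 1 (1 * x $ j + - (a $ j)) * eb 1 ((-1) * x $ j + b $ j) \<noteq> 0"
    unfolding bbump_def by (metis (no_types, lifting) UNIV_I finite_class.finite_UNIV less_irrefl prod_zero_iff)
  then show "x \<in> box a b" unfolding mem_box_cart by (auto simp: eb1 split: if_splits)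
next
  assume "x \<in> box a b"
  then show "bbump a b x > 0" unfolding bbump_def mem_box_cart
    by (intro prod_pos mult_pos_pos) (auto simp: eb1_pos)
qed

lemma bbump_zero: "x \<notin> box a b \<Longrightarrow> bbump a b x = 0"
  using bbump_pos[of a b x] bbump_range[of a b x] by linarith

definition plat :: "real \<Rightarrow> real" where
  "plat t = eb 1 t / (eb 1 t + eb 1 (1 - t))"

lemma plat_den_pos: "eb 1 t + eb 1 (1 - t) > 0"
  by (cases "t > 0") (auto simp: eb1 add_pos_nonneg add_nonneg_pos)

lemma plat_smooth: "smooth_fun (\<lambda>x::real^'n::finite. plat (s * x $ j + d))"
proof -
  have "smooth_fun (\<lambda>x::real^'n::finite. eb 1 (s * x $ j + d) / (eb 1 (s * x $ j + d) + eb 1 ((-s) * x $ j + (1 - d))))"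
  proof (intro smooth_div smooth_add smooth_eb1)
    fix x :: "real^'n"
    have "eb 1 (s * x $ j + d) + eb 1 (1 - (s * x $ j + d)) > 0" by (rule plat_den_pos)
    then show "eb 1 (s * x $ j + d) + eb 1 ((-s) * x $ j + (1 - d)) \<noteq> 0" by (simp add: algebra_simps)
  qed
  moreover have "(\<lambda>x::real^'n::finite. eb 1 (s * x $ j + d) / (eb 1 (s * x $ j + d) + eb 1 ((-s) * x $ j + (1 - d))))
     = (\<lambda>x. plat (s * x $ j + d))"
    by (auto simp: plat_def algebra_simps)
  ultimately show ?thesis by simp
qed

lemma plat_one: "t \<ge> 1 \<Longrightarrow> plat t = 1"
  by (auto simp: plat_def eb1)

lemma plat_zero: "t \<le> 0 \<Longrightarrow> plat t = 0"
  by (auto simp: plat_def eb1)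

definition cutoff :: "real^'n::finite \<Rightarrow> real^'n \<Rightarrow> real^'n \<Rightarrow> real" where
  "cutoff a b x = (\<Prod>j\<in>UNIV. plat (1 * x $ j + (1 - a $ j)) * plat ((-1) * x $ j + (b $ j + 1)))"

lemma cutoff_smooth: "smooth_fun (cutoff a b)"
  unfolding cutoff_def
  by (rule smooth_prod) (simp, rule smooth_mult[OF plat_smooth plat_smooth])

lemma cutoff_one: "x \<in> cbox a b \<Longrightarrow> cutoff a b x = 1"
  unfolding cutoff_def mem_box_cart
proof (intro prod.neutral ballI)
  fix j assume "\<forall>i. a $ i \<le> x $ i \<and> x $ i \<le> b $ i"
  then have "a $ j \<le> x $ j" "x $ j \<le> b $ j" by auto
  then have "plat (1 * x $ j + (1 - a $ j)) = 1" "plat ((-1) * x $ j + (b $ j + 1)) = 1"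
    by (auto intro!: plat_one)
  then show "plat (1 * x $ j + (1 - a $ j)) * plat ((-1) * x $ j + (b $ j + 1)) = 1" by simp
qed

lemma cutoff_supp: "cutoff a b x \<noteq> 0 \<Longrightarrow> x \<in> cbox (a - 1) (b + 1)"
proof -
  assume "cutoff a b x \<noteq> 0"
  then have "\<forall>j. plat (1 * x $ j + (1 - a $ j)) \<noteq> 0 \<and> plat ((-1) * x $ j + (b $ j + 1)) \<noteq> 0"
    unfolding cutoff_def by (metis (no_types, lifting) UNIV_I finite_class.finite_UNIV mult_zero_left mult_zero_right prod_zero_iff)
  then have "\<forall>j. x $ j + (1 - a $ j) > 0 \<and> (-1) * x $ j + (b $ j + 1) > 0"
    using plat_zero by (metis not_le mult_1)
  then show ?thesis unfolding mem_box_cart by (simp add: algebra_simps) (meson less_imp_le)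
qed


lemma rat_box_cover:
  fixes U :: "(real^'n::finite) set"
  assumes "open U" "x \<in> U"
  shows "\<exists>a b. (\<forall>i. a $ i \<in> \<rat>) \<and> (\<forall>i. b $ i \<in> \<rat>) \<and> cbox a b \<subseteq> U \<and> x \<in> box a b"
proof -
  obtain e where e: "e > 0" "ball x e \<subseteq> U" using assms openE by blast
  obtain a b :: "real^'n" where ab: "\<forall>i\<in>Basis. a \<bullet> i \<in> \<rat> \<and> b \<bullet> i \<in> \<rat>" "x \<in> box a b" "box a b \<subseteq> ball x (e/2)"
    using rational_boxes[of "e/2" x] e by auto
  have "axis i 1 \<in> (Basis :: (real^'n) set)" for i
    by simp
  then have ra: "\<forall>i. a $ i \<in> \<rat>" and rb: "\<forall>i. b $ i \<in> \<rat>"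
    using ab(1) by (auto simp: cart_eq_inner_axis)
  have "box a b \<noteq> {}" using ab(2) by blast
  then have "cbox a b = closure (box a b)" by (simp add: closure_box)
  also have "\<dots> \<subseteq> closure (ball x (e/2))" by (rule closure_mono[OF ab(3)])
  also have "\<dots> = cball x (e/2)" using e by (simp add: closure_ball)
  also have "\<dots> \<subseteq> ball x e" using e by (auto simp: subset_eq)
  finally show ?thesis using e ra rb ab(2) by blast
qed

lemma eta_seq:
  fixes U :: "(real^'n::finite) set"
  assumes "open U"
  obtains \<eta> :: "nat \<Rightarrow> real^'n \<Rightarrow> real" where
    "\<And>j. test_fun (\<eta> j)" "\<And>j. supp (\<eta> j) \<subseteq> U" "\<And>j x. 0 \<le> \<eta> j x" "\<And>j x. \<eta> j x \<le> 1"
    "\<And>j x. x \<notin> U \<Longrightarrow> \<eta> j x = 0" "\<And>x. x \<in> U \<Longrightarrow> (\<lambda>j. \<eta> j x) \<longlonglongrightarrow> 1"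
proof (cases "U = {}")
  case True
  have "test_fun (\<lambda>x::real^'n. 0::real)" "supp (\<lambda>x::real^'n. 0::real) \<subseteq> {}"
    by (rule test_funI[OF smooth_const compact_empty], simp)+
  then show ?thesis using that[of "\<lambda>j x. 0"] True by auto
next
  case False
  define Q where "Q = {v::real^'n. \<forall>i. v $ i \<in> \<rat>}"
  have cQ: "countable Q" unfolding Q_def by (rule countable_vector) (rule countable_rat)
  define R where "R = {p \<in> Q \<times> Q. cbox (fst p) (snd p) \<subseteq> U}"
  have cR: "countable R" unfolding R_def by (rule countable_subset[of _ "Q \<times> Q"]) (auto simp: cQ)
  have cover: "\<exists>q\<in>R. x \<in> box (fst q) (snd q)" if "x \<in> U" for x
    using rat_box_cover[OF assms that] unfolding R_def Q_def by force
  have Rne: "R \<noteq> {}" using False cover by blast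
  define p where "p l = from_nat_into R l" for l
  have pR: "p l \<in> R" for l unfolding p_def using Rne by (rule from_nat_into)
  define B where "B l x = bbump (fst (p l)) (snd (p l)) x" for l x
  define \<eta> where "\<eta> j x = 1 - (\<Prod>l<j. (1 - B l x) ^ j)" for j x
  have B01: "0 \<le> B l x" "B l x \<le> 1" for l x unfolding B_def by (rule bbump_range)+
  have F01: "0 \<le> (1 - B l x) ^ j" "(1 - B l x) ^ j \<le> 1" for l x j
    using B01[of l x] by (auto intro: power_le_one)
  have P01: "0 \<le> (\<Prod>l<j. (1 - B l x) ^ j)" "(\<Prod>l<j. (1 - B l x) ^ j) \<le> 1" for j x
    using F01 by (auto intro: prod_nonneg prod_le_1)
  define K where "K j = (\<Union>l<j. cbox (fst (p l)) (snd (p l)))" for j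
  have Kc: "compact (K j)" for j unfolding K_def by (intro compact_UN) auto
  have KU: "K j \<subseteq> U" for j using pR unfolding K_def R_def by auto
  have outK: "\<eta> j x = 0" if "x \<notin> K j" for j x
  proof -
    have "B l x = 0" if "l < j" for l
    proof -
      have "x \<notin> box (fst (p l)) (snd (p l))"
        using \<open>x \<notin> K j\<close> that box_subset_cbox unfolding K_def by blast
      then show ?thesis unfolding B_def by (rule bbump_zero)
    qed
    then show ?thesis unfolding \<eta>_def by simp
  qed
  have smooth: "smooth_fun (\<eta> j)" for j
    unfolding \<eta>_def B_def
    by (intro smooth_diff smooth_const smooth_prod smooth_power bbump_smooth) simp
  have T: "test_fun (\<eta> j) \<and> supp (\<eta> j) \<subseteq> K j" for j
  proof -
    have "\<And>x. \<eta> j x \<noteq> 0 \<Longrightarrow> x \<in> K j" using outK by blast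
    from test_funI[OF smooth[of j] Kc[of j] this] show ?thesis by blast
  qed
  show ?thesis
  proof (rule that)
    show "test_fun (\<eta> j)" for j using T by blast
    show "supp (\<eta> j) \<subseteq> U" for j using T KU by blast
    show "0 \<le> \<eta> j x" "\<eta> j x \<le> 1" for j x unfolding \<eta>_def using P01[where j=j and x=x] by auto
    show "\<eta> j x = 0" if "x \<notin> U" for j x using outK KU that by blast
    show "(\<lambda>j. \<eta> j x) \<longlonglongrightarrow> 1" if xU: "x \<in> U" for x
    proof -
      obtain q where q: "q \<in> R" "x \<in> box (fst q) (snd q)" using cover[OF xU] by blast
      obtain L where L: "p L = q" using from_nat_into_surj[OF cR q(1)] unfolding p_def by blast
      define c where "c = B L x"
      have c: "0 < c" "c \<le> 1" using bbump_pos q(2) bbump_range unfolding c_def B_def L by auto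
      have up: "(\<Prod>l<j. (1 - B l x) ^ j) \<le> (1 - c) ^ j" if "L < j" for j
      proof -
        have "(\<Prod>l<j. (1 - B l x) ^ j) = (1 - B L x) ^ j * (\<Prod>l\<in>{..<j} - {L}. (1 - B l x) ^ j)"
          using that by (subst prod.remove[of _ L]) auto
        also have "\<dots> \<le> (1 - B L x) ^ j * 1"
          by (intro mult_left_mono prod_le_1) (use F01 in auto)
        finally show ?thesis unfolding c_def by simp
      qed
      have lim: "(\<lambda>j. (1 - c) ^ j) \<longlonglongrightarrow> 0"
        by (rule LIMSEQ_power_zero) (use c in auto)
      have "(\<lambda>j. \<Prod>l<j. (1 - B l x) ^ j) \<longlonglongrightarrow> 0"
      proof (rule tendsto_sandwich[OF _ _ tendsto_const lim])
        show "\<forall>\<^sub>F j in sequentially. 0 \<le> (\<Prod>l<j. (1 - B l x) ^ j)" using P01 by simp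
        show "\<forall>\<^sub>F j in sequentially. (\<Prod>l<j. (1 - B l x) ^ j) \<le> (1 - c) ^ j"
          unfolding eventually_sequentially using up by (intro exI[of _ "Suc L"]) auto
      qed
      then have "(\<lambda>j. 1 - (\<Prod>l<j. (1 - B l x) ^ j)) \<longlonglongrightarrow> 1 - 0"
        by (intro tendsto_diff tendsto_const)
      then show ?thesis unfolding \<eta>_def by simp
    qed
  qed
qed


lemma test_cont: "test_fun \<psi> \<Longrightarrow> continuous_on UNIV \<psi>"
  unfolding test_fun_def by (blast intro: smooth_cont)

lemma supp_out: "x \<notin> supp f \<Longrightarrow> f x = 0"
proof -
  assume a: "x \<notin> supp f"
  have "{x. f x \<noteq> 0} \<subseteq> supp f" unfolding supp_def by (rule closure_subset)
  then have "x \<notin> {x. f x \<noteq> 0}" using a by (rule contra_subsetD)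
  then show ?thesis by simp
qed

lemma test_compact: "test_fun \<psi> \<Longrightarrow> compact (supp \<psi>)"
  unfolding test_fun_def by (rule conjunct2)

lemma closed_supp: "closed (supp f)"
  unfolding supp_def by simp

lemma test_pdpd:
  assumes "test_fun \<psi>"
  shows "continuous_on UNIV (\<lambda>x. pd i (pd j \<psi>) x)" "\<And>x. x \<notin> supp \<psi> \<Longrightarrow> pd i (pd j \<psi>) x = 0"
proof -
  have s: "smooth_fun \<psi>" using assms unfolding test_fun_def by blast
  show "continuous_on UNIV (\<lambda>x. pd i (pd j \<psi>) x)"
    using smooth_cont[OF smooth_pd[OF smooth_pd[OF s]]] by simp
  fix x assume x: "x \<notin> supp \<psi>"
  have "\<And>y. y \<notin> supp \<psi> \<Longrightarrow> pd j \<psi> y = 0"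
    using pd_zero_outside[OF closed_supp] supp_out by blast
  then show "pd i (pd j \<psi>) x = 0"
    using pd_zero_outside[OF closed_supp] x by blast
qed

lemma meas_cont: "continuous_on UNIV (\<rho>::real^'n::finite \<Rightarrow> real) \<Longrightarrow> \<rho> \<in> borel_measurable lborel"
  using borel_measurable_continuous_onI by (simp add: measurable_lborel1)

lemma loc_int:
  fixes u :: "real^'n::finite \<Rightarrow> complex"
  assumes u: "L2 u" and c: "continuous_on UNIV \<rho>" and K: "compact K" and z: "\<And>x. x \<notin> K \<Longrightarrow> \<rho> x = 0"
  shows "integrable lborel (\<lambda>x. u x * of_real (\<rho> x))"
proof -
  have "bounded (\<rho> ` K)" using compact_continuous_image[OF continuous_on_subset[OF c] K] compact_imp_bounded by blast
  then obtain M where M0: "M > 0" "\<forall>y\<in>\<rho> ` K. norm y \<le> M" unfolding bounded_pos by blast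
  then have M: "M > 0" "\<And>x. x \<in> K \<Longrightarrow> norm (\<rho> x) \<le> M" by auto
  have um: "u \<in> borel_measurable lborel" and ui: "integrable lborel (\<lambda>x. (cmod (u x))\<^sup>2)" using u unfolding L2_def by auto
  have iK: "integrable lborel (indicat_real K)"
  proof (rule integrable_real_indicator)
    show "K \<in> sets lborel" using borel_closed[OF compact_imp_closed[OF K]] by simp
    show "emeasure lborel K < \<infinity>" using K compact_imp_bounded emeasure_bounded_finite by blast
  qed
  have ib: "integrable lborel (\<lambda>x. M * (indicat_real K x + (cmod (u x))\<^sup>2))"
    by (intro integrable_mult_right Bochner_Integration.integrable_add iK ui)
  show ?thesis
  proof (rule Bochner_Integration.integrable_bound[OF ib])
    show "(\<lambda>x. u x * complex_of_real (\<rho> x)) \<in> borel_measurable lborel"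
      using um meas_cont[OF c] by measurable
    show "AE x in lborel. norm (u x * complex_of_real (\<rho> x)) \<le> norm (M * (indicat_real K x + (cmod (u x))\<^sup>2))"
    proof (rule AE_I2)
      fix x
      show "norm (u x * complex_of_real (\<rho> x)) \<le> norm (M * (indicat_real K x + (cmod (u x))\<^sup>2))"
      proof (cases "x \<in> K")
        case True
        have "cmod (u x) \<le> 1 + (cmod (u x))\<^sup>2"
        proof (cases "cmod (u x) \<le> 1")
          case True then show ?thesis by (simp add: add_increasing2)
        next
          case False
          then have "cmod (u x) * 1 \<le> cmod (u x) * cmod (u x)" by (intro mult_left_mono) auto
          then show ?thesis by (simp add: power2_eq_square)
        qed
        moreover have "norm (\<rho> x) \<le> M" using M True by blast
        ultimately have "cmod (u x) * norm (\<rho> x) \<le> (1 + (cmod (u x))\<^sup>2) * M"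
          by (intro mult_mono) auto
        then show ?thesis using True M by (simp add: norm_mult abs_mult algebra_simps)
      next
        case False then show ?thesis using z by simp
      qed
    qed
  qed
qed

lemma loc_int_test:
  fixes u :: "real^'n::finite \<Rightarrow> complex"
  assumes "L2 u" "test_fun \<psi>"
  shows "integrable lborel (\<lambda>x. u x * of_real (\<psi> x))"
    "integrable lborel (\<lambda>x. u x * of_real (pd i (pd j \<psi>) x))"
  using loc_int[OF assms(1) test_cont[OF assms(2)] test_compact[OF assms(2)] supp_out[of _ \<psi>]]
    loc_int[OF assms(1) test_pdpd(1)[OF assms(2)] test_compact[OF assms(2)] test_pdpd(2)[OF assms(2)]]
  by simp_all

lemma FL:
  fixes F :: "real^'n::finite \<Rightarrow> complex"
  assumes U: "open U" and Fm: "F \<in> borel_measurable lborel" and \<rho>: "smooth_fun \<rho>"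
    and int: "integrable lborel (\<lambda>x. indicator U x *\<^sub>R (F x * of_real (\<rho> x)))"
    and test: "\<And>\<psi>. test_fun \<psi> \<Longrightarrow> supp \<psi> \<subseteq> U \<Longrightarrow> (\<integral>x. F x * of_real (\<psi> x) \<partial>lborel) = 0"
  shows "(\<integral>x. indicator U x *\<^sub>R (F x * of_real (\<rho> x)) \<partial>lborel) = 0"
proof -
  obtain \<eta> :: "nat \<Rightarrow> real^'n \<Rightarrow> real" where
    e1: "\<And>j. test_fun (\<eta> j)" and e2: "\<And>j. supp (\<eta> j) \<subseteq> U" and e3: "\<And>j x. 0 \<le> \<eta> j x" and e4: "\<And>j x. \<eta> j x \<le> 1"
    and e5: "\<And>j x. x \<notin> U \<Longrightarrow> \<eta> j x = 0" and e6: "\<And>x. x \<in> U \<Longrightarrow> (\<lambda>j. \<eta> j x) \<longlonglongrightarrow> 1"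
    using eta_seq[OF U] by blast
  define s where "s j x = F x * of_real (\<eta> j x * \<rho> x)" for j x
  have zero: "(\<integral>x. s j x \<partial>lborel) = 0" for j
  proof -
    have sm: "smooth_fun (\<lambda>x. \<eta> j x * \<rho> x)"
      using e1[of j] \<rho> unfolding test_fun_def by (blast intro: smooth_mult)
    have "\<And>x. \<eta> j x * \<rho> x \<noteq> 0 \<Longrightarrow> x \<in> supp (\<eta> j)"
    proof -
      fix x assume "\<eta> j x * \<rho> x \<noteq> 0"
      then have "\<eta> j x \<noteq> 0" by auto
      then show "x \<in> supp (\<eta> j)" using supp_out[of x "\<eta> j"] by auto
    qed
    from test_funI[OF sm test_compact[OF e1[of j]] this]
    have "test_fun (\<lambda>x. \<eta> j x * \<rho> x)" "supp (\<lambda>x. \<eta> j x * \<rho> x) \<subseteq> U" using e2[of j] by auto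
    from test[OF this] show ?thesis unfolding s_def .
  qed
  let ?f = "\<lambda>x. indicator U x *\<^sub>R (F x * of_real (\<rho> x))"
  have "(\<lambda>j. \<integral>x. s j x \<partial>lborel) \<longlonglongrightarrow> (\<integral>x. ?f x \<partial>lborel)"
  proof (rule integral_dominated_convergence[where w="\<lambda>x. norm (?f x)"])
    show "?f \<in> borel_measurable lborel" using int by (rule borel_measurable_integrable)
    show "s j \<in> borel_measurable lborel" for j
      unfolding s_def using Fm meas_cont[OF test_cont[OF e1[of j]]] meas_cont[OF smooth_cont[OF \<rho>]]
      by measurable
    show "integrable lborel (\<lambda>x. norm (?f x))" using int by (rule integrable_norm)
    show "AE x in lborel. (\<lambda>j. s j x) \<longlonglongrightarrow> ?f x"
    proof (rule AE_I2)
      fix x show "(\<lambda>j. s j x) \<longlonglongrightarrow> ?f x"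
      proof (cases "x \<in> U")
        case True
        have "(\<lambda>j. F x * of_real (\<eta> j x * \<rho> x)) \<longlonglongrightarrow> F x * of_real (1 * \<rho> x)"
          by (intro tendsto_intros e6 True)
        then show ?thesis using True unfolding s_def by simp
      next
        case False then show ?thesis unfolding s_def using e5 by simp
      qed
    qed
    show "AE x in lborel. norm (s j x) \<le> norm (?f x)" for j
    proof (rule AE_I2)
      fix x show "norm (s j x) \<le> norm (?f x)"
      proof (cases "x \<in> U")
        case True
        have "norm (\<eta> j x) \<le> 1" using e3 e4 by simp
        then have "cmod (F x) * (norm (\<eta> j x) * norm (\<rho> x)) \<le> cmod (F x) * (1 * norm (\<rho> x))"
          by (intro mult_left_mono mult_right_mono) auto
        then show ?thesis using True unfolding s_def by (simp add: norm_mult)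
      next
        case False then show ?thesis unfolding s_def using e5 by simp
      qed
    qed
  qed
  moreover have "(\<lambda>j. \<integral>x. s j x \<partial>lborel) = (\<lambda>j. 0)" using zero by simp
  ultimately have "(\<lambda>j. 0) \<longlonglongrightarrow> (\<integral>x. ?f x \<partial>lborel)" by simp
  then show ?thesis using LIMSEQ_unique[OF _ tendsto_const] by metis
qed


lemma graph_negligible:
  fixes e :: "real^'n::finite" and \<gamma> :: "real^'n \<Rightarrow> real"
  assumes e: "norm e = 1" and L: "L-lipschitz_on UNIV \<gamma>"
  shows "negligible {x. x \<bullet> e = \<gamma> (x - (x \<bullet> e) *\<^sub>R e)}"
proof -
  define H where "H = {p::real^'n. e \<bullet> p = 0}"
  have e0: "e \<noteq> 0" using e by auto
  have nH: "negligible H" unfolding H_def by (rule negligible_hyperplane) (use e0 in simp)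
  define f where "f p = p + \<gamma> p *\<^sub>R e" for p
  have L0: "0 \<le> L" using L by (rule lipschitz_on_nonneg)
  have "negligible (f ` H)"
  proof (rule negligible_locally_Lipschitz_image[OF order_refl nH])
    fix x assume "x \<in> H"
    show "\<exists>T B. open T \<and> x \<in> T \<and> (\<forall>y\<in>H \<inter> T. norm (f y - f x) \<le> B * norm (y - x))"
    proof (intro exI conjI ballI)
      show "open (UNIV :: (real^'n) set)" by simp
      show "x \<in> UNIV" by simp
      fix y
      have "norm (f y - f x) = norm ((y - x) + (\<gamma> y - \<gamma> x) *\<^sub>R e)" unfolding f_def by (simp add: algebra_simps)
      also have "\<dots> \<le> norm (y - x) + norm ((\<gamma> y - \<gamma> x) *\<^sub>R e)" by (rule norm_triangle_ineq)
      also have "norm ((\<gamma> y - \<gamma> x) *\<^sub>R e) = dist (\<gamma> y) (\<gamma> x)" using e by (simp add: dist_real_def)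
      also have "dist (\<gamma> y) (\<gamma> x) \<le> L * dist y x" using lipschitz_onD[OF L] by simp
      finally show "norm (f y - f x) \<le> (1 + L) * norm (y - x)" by (simp add: dist_norm algebra_simps)
    qed
  qed
  moreover have "{x. x \<bullet> e = \<gamma> (x - (x \<bullet> e) *\<^sub>R e)} \<subseteq> f ` H"
  proof
    fix x assume x: "x \<in> {x. x \<bullet> e = \<gamma> (x - (x \<bullet> e) *\<^sub>R e)}"
    define p where "p = x - (x \<bullet> e) *\<^sub>R e"
    have ee: "e \<bullet> e = 1" using e by (simp add: dot_square_norm)
    have "e \<bullet> p = 0" unfolding p_def using ee by (simp add: inner_diff_right inner_commute)
    moreover have "f p = x" using x unfolding f_def p_def by simp
    ultimately show "x \<in> f ` H" unfolding H_def by force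
  qed
  ultimately show ?thesis by (rule negligible_subset)
qed

lemma local_frontier_negligible:
  fixes \<Omega> :: "(real^'n::finite) set"
  assumes "lipschitz_domain \<Omega>" "x0 \<in> frontier \<Omega>"
  shows "\<exists>r>0. negligible (frontier \<Omega> \<inter> ball x0 r)"
proof -
  have op: "open \<Omega>" using assms(1) unfolding lipschitz_domain_def by blast
  obtain r e \<gamma> L where r: "r > 0" and e: "norm e = 1" and L: "L-lipschitz_on UNIV \<gamma>"
    and eq: "\<Omega> \<inter> ball x0 r = {x \<in> ball x0 r. x \<bullet> e > \<gamma> (x - (x \<bullet> e) *\<^sub>R e)}"
  proof -
    have "\<exists>r>0. \<exists>e. norm e = 1 \<and> (\<exists>\<gamma> L. L-lipschitz_on UNIV \<gamma> \<and>
        \<Omega> \<inter> ball x0 r = {x \<in> ball x0 r. x \<bullet> e > \<gamma> (x - (x \<bullet> e) *\<^sub>R e)})"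
      using assms unfolding lipschitz_domain_def by blast
    then show ?thesis using that by blast
  qed
  define h where "h x = x \<bullet> e - \<gamma> (x - (x \<bullet> e) *\<^sub>R e)" for x
  have cg: "continuous_on UNIV \<gamma>" using L by (rule lipschitz_on_continuous_on)
  have ch: "continuous_on UNIV h"
    unfolding h_def
    by (intro continuous_intros continuous_on_compose2[OF cg]) auto
  have "frontier \<Omega> \<inter> ball x0 r \<subseteq> {x. x \<bullet> e = \<gamma> (x - (x \<bullet> e) *\<^sub>R e)}"
  proof
    fix x assume x: "x \<in> frontier \<Omega> \<inter> ball x0 r"
    have xn: "x \<notin> \<Omega>" using x op by (simp add: frontier_def interior_open)
    then have "x \<notin> \<Omega> \<inter> ball x0 r" by blast
    then have le: "h x \<le> 0" using x eq unfolding h_def by auto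
    have "x \<in> closure \<Omega>" using x by (simp add: frontier_def)
    then have "x \<in> ball x0 r \<inter> closure \<Omega>" using x by blast
    also have "\<dots> \<subseteq> closure (ball x0 r \<inter> \<Omega>)" by (rule open_Int_closure_subset) simp
    also have "\<dots> \<subseteq> {y. 0 \<le> h y}"
    proof (rule closure_minimal)
      show "ball x0 r \<inter> \<Omega> \<subseteq> {y. 0 \<le> h y}"
      proof
        fix y assume "y \<in> ball x0 r \<inter> \<Omega>"
        then have "y \<in> \<Omega> \<inter> ball x0 r" by blast
        then have "y \<bullet> e > \<gamma> (y - (y \<bullet> e) *\<^sub>R e)" using eq by blast
        then show "y \<in> {y. 0 \<le> h y}" unfolding h_def by simp
      qed
      show "closed {y. 0 \<le> h y}" using ch by (intro closed_Collect_le continuous_intros) auto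
    qed
    finally have "0 \<le> h x" by simp
    with le have "h x = 0" by simp
    then show "x \<in> {x. x \<bullet> e = \<gamma> (x - (x \<bullet> e) *\<^sub>R e)}" unfolding h_def by simp
  qed
  then have "negligible (frontier \<Omega> \<inter> ball x0 r)"
    using negligible_subset graph_negligible[OF e L] by blast
  then show ?thesis using r by blast
qed

lemma frontier_null:
  fixes \<Omega> :: "(real^'n::finite) set"
  assumes ld: "lipschitz_domain \<Omega>" and bd: "bounded \<Omega>"
  shows "frontier \<Omega> \<in> null_sets lborel"
proof -
  obtain r where r: "\<And>x0. x0 \<in> frontier \<Omega> \<Longrightarrow> r x0 > 0 \<and> negligible (frontier \<Omega> \<inter> ball x0 (r x0))"
    using local_frontier_negligible[OF ld] by metis
  have cf: "compact (frontier \<Omega>)" using bd by (rule compact_frontier_bounded)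
  have "frontier \<Omega> \<subseteq> (\<Union>x0\<in>frontier \<Omega>. ball x0 (r x0))"
    using r by force
  then obtain C where C: "C \<subseteq> frontier \<Omega>" "finite C" "frontier \<Omega> \<subseteq> (\<Union>x0\<in>C. ball x0 (r x0))"
    using compactE_image[OF cf, of "frontier \<Omega>" "\<lambda>x0. ball x0 (r x0)"] by blast
  have "frontier \<Omega> = \<Union>((\<lambda>x0. frontier \<Omega> \<inter> ball x0 (r x0)) ` C)" using C by blast
  moreover have "negligible (\<Union>((\<lambda>x0. frontier \<Omega> \<inter> ball x0 (r x0)) ` C))"
    using C r by (intro negligible_Union) auto
  ultimately have neg: "negligible (frontier \<Omega>)" by simp
  have "frontier \<Omega> \<in> sets borel" by (rule borel_closed) (rule frontier_closed)
  then show ?thesis using neg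
    by (auto simp: null_sets_completion_iff negligible_iff_null_sets)
qed


lemma glob_identity:
  fixes u :: "real^'n::finite \<Rightarrow> complex"
  assumes u: "L2 u" and hL: "\<And>i. L2 (hh i)" and hw: "\<And>i. weak_pd2 i i u (hh i)" and \<psi>: "test_fun \<psi>"
  shows "(\<integral>x. u x * of_real ((\<Sum>i\<in>UNIV. pd i (pd i \<psi>) x) + k\<^sup>2 * \<psi> x) \<partial>lborel)
       = (\<integral>x. ((\<Sum>i\<in>UNIV. hh i x) + of_real (k\<^sup>2) * u x) * of_real (\<psi> x) \<partial>lborel)"
proof -
  have i1: "integrable lborel (\<lambda>x. u x * of_real (pd i (pd i \<psi>) x))" for i
    using loc_int_test(2)[OF u \<psi>] by blast
  have i2: "integrable lborel (\<lambda>x. u x * of_real (\<psi> x))"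
    using loc_int_test(1)[OF u \<psi>] by blast
  have i3: "integrable lborel (\<lambda>x. hh i x * of_real (\<psi> x))" for i
    using loc_int_test(1)[OF hL \<psi>] by blast
  have e1: "(\<lambda>x. u x * of_real ((\<Sum>i\<in>UNIV. pd i (pd i \<psi>) x) + k\<^sup>2 * \<psi> x))
      = (\<lambda>x. (\<Sum>i\<in>UNIV. u x * of_real (pd i (pd i \<psi>) x)) + of_real (k\<^sup>2) * (u x * of_real (\<psi> x)))"
    by (simp add: sum_distrib_left algebra_simps)
  have e2: "(\<lambda>x. ((\<Sum>i\<in>UNIV. hh i x) + of_real (k\<^sup>2) * u x) * of_real (\<psi> x))
      = (\<lambda>x. (\<Sum>i\<in>UNIV. hh i x * of_real (\<psi> x)) + of_real (k\<^sup>2) * (u x * of_real (\<psi> x)))"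
    by (simp add: sum_distrib_right sum_distrib_left algebra_simps)
  have "(\<integral>x. (\<Sum>i\<in>UNIV. u x * of_real (pd i (pd i \<psi>) x)) + of_real (k\<^sup>2) * (u x * of_real (\<psi> x)) \<partial>lborel)
      = (\<Sum>i\<in>UNIV. \<integral>x. u x * of_real (pd i (pd i \<psi>) x) \<partial>lborel) + of_real (k\<^sup>2) * (\<integral>x. u x * of_real (\<psi> x) \<partial>lborel)"
    by (subst Bochner_Integration.integral_add)
       (auto intro!: Bochner_Integration.integrable_sum integrable_mult_right i1 i2
             simp: Bochner_Integration.integral_sum[OF i1])
  also have "\<dots> = (\<Sum>i\<in>UNIV. \<integral>x. hh i x * of_real (\<psi> x) \<partial>lborel) + of_real (k\<^sup>2) * (\<integral>x. u x * of_real (\<psi> x) \<partial>lborel)"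
    using hw \<psi> unfolding weak_pd2_def by simp
  also have "\<dots> = (\<integral>x. (\<Sum>i\<in>UNIV. hh i x * of_real (\<psi> x)) + of_real (k\<^sup>2) * (u x * of_real (\<psi> x)) \<partial>lborel)"
    by (subst Bochner_Integration.integral_add)
       (auto intro!: Bochner_Integration.integrable_sum integrable_mult_right i3 i2
             simp: Bochner_Integration.integral_sum[OF i3])
  finally show ?thesis unfolding e1 e2 .
qed

lemma ext_zero:
  fixes u :: "real^'n::finite \<Rightarrow> complex"
  assumes ae: "AE x in lborel. x \<notin> S \<longrightarrow> u x = 0" and \<psi>: "test_fun \<psi>" and sub: "supp \<psi> \<inter> S = {}"
  shows "(\<integral>x. u x * of_real ((\<Sum>i\<in>UNIV. pd i (pd i \<psi>) x) + k\<^sup>2 * \<psi> x) \<partial>lborel) = 0"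
proof (rule integral_eq_zero_AE)
  show "AE x in lborel. u x * of_real ((\<Sum>i\<in>UNIV. pd i (pd i \<psi>) x) + k\<^sup>2 * \<psi> x) = 0"
    using ae
  proof (rule AE_mp[OF _ AE_I2], intro impI)
    fix x assume a: "x \<notin> S \<longrightarrow> u x = 0"
    show "u x * of_real ((\<Sum>i\<in>UNIV. pd i (pd i \<psi>) x) + k\<^sup>2 * \<psi> x) = 0"
    proof (cases "x \<in> S")
      case True
      then have xs: "x \<notin> supp \<psi>" using sub by blast
      have "\<psi> x = 0" by (rule supp_out[OF xs])
      moreover have "pd i (pd i \<psi>) x = 0" for i by (rule test_pdpd(2)[OF \<psi> xs])
      ultimately show ?thesis by simp
    next
      case False then show ?thesis using a by simp
    qed
  qed
qed

lemma phi_int: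
  fixes \<phi> :: "real^'n::finite \<Rightarrow> complex"
  assumes bd: "bounded \<Omega>" and op: "open \<Omega>" and c\<phi>: "continuous_on (closure \<Omega>) \<phi>" and b\<phi>: "bounded (\<phi> ` closure \<Omega>)"
    and c\<rho>: "continuous_on UNIV \<rho>"
  shows "integrable lborel (\<lambda>x. indicator \<Omega> x *\<^sub>R (\<phi> x * of_real (\<rho> x)))"
proof -
  have cc: "compact (closure \<Omega>)" using bd by (simp add: compact_closure)
  have "bounded (\<rho> ` closure \<Omega>)"
    using compact_continuous_image[OF continuous_on_subset[OF c\<rho>] cc] compact_imp_bounded by blast
  then obtain M1 where M1: "\<forall>y\<in>\<rho> ` closure \<Omega>. norm y \<le> M1" unfolding bounded_iff by blast
  obtain M2 where M2: "\<forall>y\<in>\<phi> ` closure \<Omega>. norm y \<le> M2" using b\<phi> unfolding bounded_iff by blast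
  have iO: "integrable lborel (indicat_real \<Omega>)"
  proof (rule integrable_real_indicator)
    show "\<Omega> \<in> sets lborel" using borel_open[OF op] by simp
    show "emeasure lborel \<Omega> < \<infinity>" using bd emeasure_bounded_finite by blast
  qed
  have ib: "integrable lborel (\<lambda>x. (M2 * M1) * indicat_real \<Omega> x)"
    by (intro integrable_mult_right iO)
  show ?thesis
  proof (rule Bochner_Integration.integrable_bound[OF ib])
    have "continuous_on \<Omega> (\<lambda>x. \<phi> x * of_real (\<rho> x))"
      using continuous_on_subset[OF c\<phi> closure_subset] continuous_on_subset[OF c\<rho>]
      by (intro continuous_intros) auto
    from borel_measurable_continuous_on_indicator[OF borel_open[OF op] this]
    show "(\<lambda>x. indicator \<Omega> x *\<^sub>R (\<phi> x * of_real (\<rho> x))) \<in> borel_measurable lborel"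
      by (simp add: measurable_lborel1)
    show "AE x in lborel. norm (indicator \<Omega> x *\<^sub>R (\<phi> x * of_real (\<rho> x))) \<le> norm ((M2 * M1) * indicat_real \<Omega> x)"
    proof (rule AE_I2)
      fix x show "norm (indicator \<Omega> x *\<^sub>R (\<phi> x * of_real (\<rho> x))) \<le> norm ((M2 * M1) * indicat_real \<Omega> x)"
      proof (cases "x \<in> \<Omega>")
        case True
        then have xc: "x \<in> closure \<Omega>" using closure_subset by blast
        have "norm (\<phi> x) \<le> M2" "norm (\<rho> x) \<le> M1" using M1 M2 xc by auto
        moreover have "0 \<le> M2" using \<open>norm (\<phi> x) \<le> M2\<close> norm_ge_zero order_trans by blast
        ultimately have "norm (\<phi> x) * norm (\<rho> x) \<le> M2 * M1" by (intro mult_mono) auto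
        then show ?thesis using True by (simp add: norm_mult)
      next
        case False then show ?thesis by simp
      qed
    qed
  qed
qed

lemma cos_pd:
  fixes k d :: real and i0 :: "'n::finite"
  shows "pd i (\<lambda>x::real^'n. cos (k * x $ i0 + d)) = (\<lambda>x. (- (k * (if i0 = i then 1 else 0))) * sin (k * x $ i0 + d))"
    and "pd i (\<lambda>x::real^'n. c * sin (k * x $ i0 + d)) = (\<lambda>x. (c * (k * (if i0 = i then 1 else 0))) * cos (k * x $ i0 + d))"
proof -
  show "pd i (\<lambda>x::real^'n. cos (k * x $ i0 + d)) = (\<lambda>x. (- (k * (if i0 = i then 1 else 0))) * sin (k * x $ i0 + d))"
  proof
    fix x :: "real^'n"
    have eq: "(\<lambda>t. cos (k * (x + t *\<^sub>R axis i 1) $ i0 + d)) = (\<lambda>t. cos ((k * x $ i0 + d) + t * (k * (if i0 = i then 1 else 0))))"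
      by (auto simp: axis_def algebra_simps)
    have "((\<lambda>t. cos ((k * x $ i0 + d) + t * (k * (if i0 = i then 1 else 0)))) has_field_derivative
        (- sin ((k * x $ i0 + d) + 0 * (k * (if i0 = i then 1 else 0)))) * (k * (if i0 = i then 1 else 0))) (at 0)"
      by (intro DERIV_chain2[OF DERIV_cos]) (auto intro!: derivative_eq_intros)
    then have D: "((\<lambda>t. cos (k * (x + t *\<^sub>R axis i 1) $ i0 + d)) has_field_derivative
        (- sin ((k * x $ i0 + d) + 0 * (k * (if i0 = i then 1 else 0)))) * (k * (if i0 = i then 1 else 0))) (at 0)"
      unfolding eq .
    show "pd i (\<lambda>x::real^'n. cos (k * x $ i0 + d)) x = (- (k * (if i0 = i then 1 else 0))) * sin (k * x $ i0 + d)"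
      using pd_eqI[OF D] by simp
  qed
  show "pd i (\<lambda>x::real^'n. c * sin (k * x $ i0 + d)) = (\<lambda>x. (c * (k * (if i0 = i then 1 else 0))) * cos (k * x $ i0 + d))"
  proof
    fix x :: "real^'n"
    have eq: "(\<lambda>t. c * sin (k * (x + t *\<^sub>R axis i 1) $ i0 + d)) = (\<lambda>t. c * sin ((k * x $ i0 + d) + t * (k * (if i0 = i then 1 else 0))))"
      by (auto simp: axis_def algebra_simps)
    have "((\<lambda>t. c * sin ((k * x $ i0 + d) + t * (k * (if i0 = i then 1 else 0)))) has_field_derivative
        c * (cos ((k * x $ i0 + d) + 0 * (k * (if i0 = i then 1 else 0))) * (k * (if i0 = i then 1 else 0)))) (at 0)"
      by (intro DERIV_cmult DERIV_chain2[OF DERIV_sin]) (auto intro!: derivative_eq_intros)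
    then have D: "((\<lambda>t. c * sin (k * (x + t *\<^sub>R axis i 1) $ i0 + d)) has_field_derivative
        c * (cos ((k * x $ i0 + d) + 0 * (k * (if i0 = i then 1 else 0))) * (k * (if i0 = i then 1 else 0)))) (at 0)"
      unfolding eq .
    show "pd i (\<lambda>x::real^'n. c * sin (k * x $ i0 + d)) x = (c * (k * (if i0 = i then 1 else 0))) * cos (k * x $ i0 + d)"
      using pd_eqI[OF D] by simp
  qed
qed

lemma cos_helm:
  fixes k d :: real and i0 :: "'n::finite"
  shows "(\<Sum>i\<in>UNIV. pd i (pd i (\<lambda>x::real^'n. cos (k * x $ i0 + d))) x) + k\<^sup>2 * cos (k * x $ i0 + d) = 0"
proof -
  have "pd i (pd i (\<lambda>x::real^'n. cos (k * x $ i0 + d))) x = (if i = i0 then - (k\<^sup>2 * cos (k * x $ i0 + d)) else 0)" for i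
  proof -
    have "pd i (\<lambda>x::real^'n. cos (k * x $ i0 + d)) = (\<lambda>x. (- (k * (if i0 = i then 1 else 0))) * sin (k * x $ i0 + d))"
      by (rule cos_pd(1))
    then have "pd i (pd i (\<lambda>x::real^'n. cos (k * x $ i0 + d))) x = ((- (k * (if i0 = i then 1 else 0))) * (k * (if i0 = i then 1 else 0))) * cos (k * x $ i0 + d)"
      using cos_pd(2)[of i "- (k * (if i0 = i then 1 else 0))" k i0 d] by simp
    then show ?thesis by (auto simp: power2_eq_square)
  qed
  then show ?thesis by simp
qed


lemma key:
  fixes \<Omega> :: "(real^'n::finite) set" and \<phi> u :: "real^'n \<Rightarrow> complex" and k d :: real and i0 :: 'n
  assumes bd: "bounded \<Omega>" and ld: "lipschitz_domain \<Omega>" and c\<phi>: "continuous_on (closure \<Omega>) \<phi>"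
    and b\<phi>: "bounded (\<phi> ` closure \<Omega>)" and H: "H2_0 \<Omega> u" and he: "helmholtz_eq \<Omega> k u \<phi>"
  shows "(\<integral>x. indicator \<Omega> x *\<^sub>R (\<phi> x * of_real (cos (k * x $ i0 + d))) \<partial>lborel) = 0"
proof -
  have op: "open \<Omega>" using ld unfolding lipschitz_domain_def by blast
  have u: "L2 u" and ae: "AE x in lborel. x \<notin> closure \<Omega> \<longrightarrow> u x = 0"
    and H2: "\<forall>i j. \<exists>h. L2 h \<and> weak_pd2 i j u h"
    using H unfolding H2_0_def H2_def by auto
  have "\<forall>i. \<exists>h. L2 h \<and> weak_pd2 i i u h" using H2 by blast
  then obtain hh where hh: "\<forall>i. L2 (hh i) \<and> weak_pd2 i i u (hh i)" by metis
  then have hL: "\<And>i. L2 (hh i)" and hw: "\<And>i. weak_pd2 i i u (hh i)" by auto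
  define G where "G x = (\<Sum>i\<in>UNIV. hh i x) + of_real (k\<^sup>2) * u x" for x
  have hm: "hh i \<in> borel_measurable lborel" for i using hL unfolding L2_def by blast
  have um: "u \<in> borel_measurable lborel" using u unfolding L2_def by blast
  have Gm: "G \<in> borel_measurable lborel"
    unfolding G_def by (intro borel_measurable_add borel_measurable_sum borel_measurable_times borel_measurable_const hm um)
  have glob: "(\<integral>x. u x * of_real ((\<Sum>i\<in>UNIV. pd i (pd i \<psi>) x) + k\<^sup>2 * \<psi> x) \<partial>lborel) = (\<integral>x. G x * of_real (\<psi> x) \<partial>lborel)"
    if "test_fun \<psi>" for \<psi>
    unfolding G_def by (rule glob_identity[OF u hL hw that])
  have Gint: "integrable lborel (\<lambda>x. G x * of_real (\<psi> x))" if \<psi>: "test_fun \<psi>" for \<psi>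
  proof -
    have "(\<lambda>x. G x * of_real (\<psi> x)) = (\<lambda>x. (\<Sum>i\<in>UNIV. hh i x * of_real (\<psi> x)) + of_real (k\<^sup>2) * (u x * of_real (\<psi> x)))"
      by (simp add: G_def sum_distrib_right sum_distrib_left algebra_simps)
    moreover have "integrable lborel (\<lambda>x. (\<Sum>i\<in>UNIV. hh i x * of_real (\<psi> x)) + of_real (k\<^sup>2) * (u x * of_real (\<psi> x)))"
      by (intro Bochner_Integration.integrable_add Bochner_Integration.integrable_sum integrable_mult_right
          loc_int_test(1)[OF hL \<psi>] loc_int_test(1)[OF u \<psi>])
    ultimately show ?thesis by simp
  qed
  obtain c where c: "closure \<Omega> \<subseteq> cbox (-c) c"
    using bounded_subset_cbox_symmetric[OF bounded_closure[OF bd]] by blast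
  define V where "V = box (-c - 1) (c + 1)"
  define chi where "chi = cutoff (-c - 1) (c + 1)"
  define w where "w x = cos (k * x $ i0 + d)" for x :: "real^'n"
  define wt where "wt x = chi x * w x" for x
  have oV: "open V" unfolding V_def by (rule open_box)
  have closV: "closure \<Omega> \<subseteq> V"
  proof
    fix x assume "x \<in> closure \<Omega>"
    then have "x \<in> cbox (-c) c" using c by blast
    then show "x \<in> V" unfolding V_def mem_box_cart by (simp add: algebra_simps) (smt (verit))
  qed
  have chi1: "chi x = 1" if "x \<in> V" for x
    unfolding chi_def by (rule cutoff_one) (use that box_subset_cbox V_def in blast)
  have wsm: "smooth_fun w" using smooth_cos[of 1 k i0 d] unfolding w_def by simp
  have wtsm: "smooth_fun wt" unfolding wt_def chi_def by (intro smooth_mult cutoff_smooth wsm)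
  have wtT: "test_fun wt"
  proof (rule test_funI(1)[OF wtsm compact_cbox[of "-c - 1 - 1" "c + 1 + 1"]])
    fix x assume "wt x \<noteq> 0"
    then have "chi x \<noteq> 0" unfolding wt_def by auto
    then show "x \<in> cbox (-c - 1 - 1) (c + 1 + 1)" unfolding chi_def by (rule cutoff_supp)
  qed
  have wtV: "wt y = w y" if "y \<in> V" for y unfolding wt_def using chi1[OF that] by simp
  have pdV: "pd i (pd i wt) x = pd i (pd i w) x" if "x \<in> V" for i x
  proof (rule pd_local[OF oV that])
    fix y assume "y \<in> V"
    then show "pd i wt y = pd i w y" by (rule pd_local[OF oV]) (rule wtV)
  qed
  let ?f = "\<lambda>x. G x * of_real (wt x)"
  have fint: "integrable lborel ?f" by (rule Gint[OF wtT])
  have f0: "(\<integral>x. ?f x \<partial>lborel) = 0"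
  proof -
    have "(\<integral>x. u x * of_real ((\<Sum>i\<in>UNIV. pd i (pd i wt) x) + k\<^sup>2 * wt x) \<partial>lborel) = 0"
    proof (rule integral_eq_zero_AE)
      show "AE x in lborel. u x * of_real ((\<Sum>i\<in>UNIV. pd i (pd i wt) x) + k\<^sup>2 * wt x) = 0"
        using ae
      proof (rule AE_mp[OF _ AE_I2], intro impI)
        fix x assume a: "x \<notin> closure \<Omega> \<longrightarrow> u x = 0"
        show "u x * of_real ((\<Sum>i\<in>UNIV. pd i (pd i wt) x) + k\<^sup>2 * wt x) = 0"
        proof (cases "x \<in> closure \<Omega>")
          case True
          then have xV: "x \<in> V" using closV by blast
          have "(\<Sum>i\<in>UNIV. pd i (pd i wt) x) + k\<^sup>2 * wt x = (\<Sum>i\<in>UNIV. pd i (pd i w) x) + k\<^sup>2 * w x"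
            using pdV[OF xV] wtV[OF xV] by simp
          also have "\<dots> = 0" unfolding w_def by (rule cos_helm)
          finally show ?thesis by simp
        next
          case False then show ?thesis using a by simp
        qed
      qed
    qed
    then show ?thesis using glob[OF wtT] by simp
  qed
  have sO: "\<Omega> \<in> sets lborel" using borel_open[OF op] by simp
  have sF: "frontier \<Omega> \<in> sets lborel" using borel_closed[OF frontier_closed] by simp
  have oE: "open (- closure \<Omega>)" by (rule open_Compl[OF closed_closure])
  have sE: "- closure \<Omega> \<in> sets lborel" using borel_open[OF oE] by simp
  have split: "?f x = indicator \<Omega> x *\<^sub>R ?f x + (indicator (frontier \<Omega>) x *\<^sub>R ?f x + indicator (- closure \<Omega>) x *\<^sub>R ?f x)" for x
  proof -
    have "closure \<Omega> = \<Omega> \<union> frontier \<Omega>" using op by (simp add: frontier_def interior_open Un_Diff_cancel closure_subset Un_absorb1)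
    moreover have "\<Omega> \<inter> frontier \<Omega> = {}" using op by (simp add: frontier_def interior_open)
    ultimately show ?thesis by (cases "x \<in> \<Omega>"; cases "x \<in> frontier \<Omega>") (auto simp: indicator_def)
  qed
  have i1: "integrable lborel (\<lambda>x. indicator \<Omega> x *\<^sub>R ?f x)" by (rule integrable_mult_indicator[OF sO fint])
  have i2: "integrable lborel (\<lambda>x. indicator (frontier \<Omega>) x *\<^sub>R ?f x)" by (rule integrable_mult_indicator[OF sF fint])
  have i3: "integrable lborel (\<lambda>x. indicator (- closure \<Omega>) x *\<^sub>R ?f x)" by (rule integrable_mult_indicator[OF sE fint])
  have "(\<integral>x. ?f x \<partial>lborel) = (\<integral>x. indicator \<Omega> x *\<^sub>R ?f x \<partial>lborel) + ((\<integral>x. indicator (frontier \<Omega>) x *\<^sub>R ?f x \<partial>lborel) + (\<integral>x. indicator (- closure \<Omega>) x *\<^sub>R ?f x \<partial>lborel))"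
    apply (subst split)
    apply (subst Bochner_Integration.integral_add[OF i1 Bochner_Integration.integrable_add[OF i2 i3]])
    apply (subst Bochner_Integration.integral_add[OF i2 i3])
    apply (rule refl)
    done
  moreover have z2: "(\<integral>x. indicator (frontier \<Omega>) x *\<^sub>R ?f x \<partial>lborel) = 0"
  proof (rule integral_eq_zero_AE)
    show "AE x in lborel. indicator (frontier \<Omega>) x *\<^sub>R ?f x = 0"
      using AE_not_in[OF frontier_null[OF ld bd]] by (rule AE_mp) (auto intro!: AE_I2)
  qed
  moreover have z3: "(\<integral>x. indicator (- closure \<Omega>) x *\<^sub>R ?f x \<partial>lborel) = 0"
  proof (rule FL[OF oE Gm wtsm])
    show "integrable lborel (\<lambda>x. indicator (- closure \<Omega>) x *\<^sub>R (G x * of_real (wt x)))" by (rule i3)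
    fix \<psi> assume \<psi>: "test_fun \<psi>" "supp \<psi> \<subseteq> - closure \<Omega>"
    have "supp \<psi> \<inter> closure \<Omega> = {}" using \<psi>(2) by blast
    from ext_zero[OF ae \<psi>(1) this, of k] glob[OF \<psi>(1)]
    show "(\<integral>x. G x * of_real (\<psi> x) \<partial>lborel) = 0" by simp
  qed
  moreover have z1: "(\<integral>x. indicator \<Omega> x *\<^sub>R ?f x \<partial>lborel) = (\<integral>x. indicator \<Omega> x *\<^sub>R (\<phi> x * of_real (w x)) \<partial>lborel)"
  proof -
    define F where "F x = indicator \<Omega> x *\<^sub>R G x - indicator \<Omega> x *\<^sub>R \<phi> x" for x
    have c\<phi>O: "continuous_on \<Omega> \<phi>" using continuous_on_subset[OF c\<phi> closure_subset] .
    have Fm: "F \<in> borel_measurable lborel"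
    proof -
      have "(\<lambda>x. indicator \<Omega> x *\<^sub>R \<phi> x) \<in> borel_measurable borel"
        by (rule borel_measurable_continuous_on_indicator[OF borel_open[OF op] c\<phi>O])
      then have "(\<lambda>x. indicator \<Omega> x *\<^sub>R \<phi> x) \<in> borel_measurable lborel" by (simp add: measurable_lborel1)
      moreover have "(\<lambda>x. indicator \<Omega> x *\<^sub>R G x) \<in> borel_measurable lborel"
        using Gm sO by (intro borel_measurable_scaleR borel_measurable_indicator)
      ultimately show ?thesis unfolding F_def by (intro borel_measurable_diff)
    qed
    have cw: "continuous_on UNIV w" by (rule smooth_cont[OF wsm])
    have ip: "integrable lborel (\<lambda>x. indicator \<Omega> x *\<^sub>R (\<phi> x * of_real (\<rho> x)))" if "continuous_on UNIV \<rho>" for \<rho>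
      by (rule phi_int[OF bd op c\<phi> b\<phi> that])
    have eqGw: "indicator \<Omega> x *\<^sub>R (G x * of_real (w x)) = indicator \<Omega> x *\<^sub>R ?f x" for x
    proof (cases "x \<in> \<Omega>")
      case True
      then have "x \<in> V" using subsetD[OF closV subsetD[OF closure_subset]] by blast
      then show ?thesis using wtV[of x] by simp
    qed simp
    have eqF: "indicator \<Omega> x *\<^sub>R (F x * of_real (w x)) = indicator \<Omega> x *\<^sub>R ?f x - indicator \<Omega> x *\<^sub>R (\<phi> x * of_real (w x))" for x
      using eqGw[of x] unfolding F_def by (cases "x \<in> \<Omega>") (auto simp: algebra_simps)
    have "(\<integral>x. indicator \<Omega> x *\<^sub>R (F x * of_real (w x)) \<partial>lborel) = 0"
    proof (rule FL[OF op Fm wsm])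
      show "integrable lborel (\<lambda>x. indicator \<Omega> x *\<^sub>R (F x * of_real (w x)))"
        unfolding eqF by (intro Bochner_Integration.integrable_diff i1 ip cw)
      fix \<psi> assume \<psi>: "test_fun \<psi>" "supp \<psi> \<subseteq> \<Omega>"
      have z: "\<psi> x = 0" if "x \<notin> \<Omega>" for x using \<psi>(2) that supp_out[of x \<psi>] by blast
      have e1: "F x * of_real (\<psi> x) = G x * of_real (\<psi> x) - indicator \<Omega> x *\<^sub>R (\<phi> x * of_real (\<psi> x))" for x
        unfolding F_def using z[of x] by (cases "x \<in> \<Omega>") (auto simp: algebra_simps)
      have e2: "indicator \<Omega> x *\<^sub>R (\<phi> x * of_real (\<psi> x)) = \<phi> x * of_real (\<psi> x)" for x
        using z[of x] by (cases "x \<in> \<Omega>") auto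
      have "(\<integral>x. F x * of_real (\<psi> x) \<partial>lborel) = (\<integral>x. G x * of_real (\<psi> x) \<partial>lborel) - (\<integral>x. indicator \<Omega> x *\<^sub>R (\<phi> x * of_real (\<psi> x)) \<partial>lborel)"
        unfolding e1 by (rule Bochner_Integration.integral_diff[OF Gint[OF \<psi>(1)] ip[OF test_cont[OF \<psi>(1)]]])
      also have "\<dots> = (\<integral>x. G x * of_real (\<psi> x) \<partial>lborel) - (\<integral>x. \<phi> x * of_real (\<psi> x) \<partial>lborel)"
        unfolding e2 ..
      also have "(\<integral>x. G x * of_real (\<psi> x) \<partial>lborel) = (\<integral>x. \<phi> x * of_real (\<psi> x) \<partial>lborel)"
        using glob[OF \<psi>(1)] he \<psi> unfolding helmholtz_eq_def by simp
      finally show "(\<integral>x. F x * of_real (\<psi> x) \<partial>lborel) = 0" by simp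
    qed
    then have "(\<integral>x. indicator \<Omega> x *\<^sub>R ?f x - indicator \<Omega> x *\<^sub>R (\<phi> x * of_real (w x)) \<partial>lborel) = 0"
      unfolding eqF .
    then show ?thesis
      using Bochner_Integration.integral_diff[OF i1 ip[OF cw]] by simp
  qed
  ultimately show ?thesis using f0 unfolding w_def by simp
qed


lemma exists_zero:
  fixes g w :: "real^'n::finite \<Rightarrow> real"
  assumes op: "open \<Omega>" and ne: "\<Omega> \<noteq> {}" and conn: "connected \<Omega>" and cg: "continuous_on \<Omega> g"
    and wpos: "\<And>y. y \<in> \<Omega> \<Longrightarrow> w y > 0"
    and int: "integrable lborel (\<lambda>y. indicator \<Omega> y * (g y * w y))"
    and zero: "(\<integral>y. indicator \<Omega> y * (g y * w y) \<partial>lborel) = 0"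
  shows "\<exists>z\<in>\<Omega>. g z = 0"
proof (rule ccontr)
  assume "\<not> (\<exists>z\<in>\<Omega>. g z = 0)"
  then have nz: "\<And>z. z \<in> \<Omega> \<Longrightarrow> g z \<noteq> 0" by blast
  have sO: "\<Omega> \<in> sets lborel" using borel_open[OF op] by simp
  have notnull: "\<Omega> \<notin> null_sets lborel"
  proof
    assume "\<Omega> \<in> null_sets lborel"
    then have "\<Omega> \<in> null_sets lebesgue" by (simp add: null_sets_completionI)
    then have "negligible \<Omega>" by (simp add: negligible_iff_null_sets)
    then show False using open_not_negligible[OF op ne] by blast
  qed
  have sgn: "(\<forall>z\<in>\<Omega>. g z > 0) \<or> (\<forall>z\<in>\<Omega>. g z < 0)"
  proof (rule ccontr)
    assume "\<not> ?thesis"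
    then obtain a b where a: "a \<in> \<Omega>" "g a \<le> 0" and b: "b \<in> \<Omega>" "g b \<ge> 0" by force
    have "connected (g ` \<Omega>)" by (rule connected_continuous_image[OF cg conn])
    from connectedD_interval[OF this _ _ a(2) b(2)] a(1) b(1)
    have "0 \<in> g ` \<Omega>" by blast
    then show False using nz by force
  qed
  define s :: real where "s = (if \<forall>z\<in>\<Omega>. g z > 0 then 1 else -1)"
  have spos: "s * g z > 0" if "z \<in> \<Omega>" for z
    using sgn that unfolding s_def by (auto simp: mult_less_0_iff)
  let ?f = "\<lambda>y. s * (indicator \<Omega> y * (g y * w y))"
  have fi: "integrable lborel ?f" using int by (rule integrable_mult_right)
  have fz: "(\<integral>y. ?f y \<partial>lborel) = 0" using zero by simp
  have fpos: "?f y > 0" if "y \<in> \<Omega>" for y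
  proof -
    have "s * g y * w y > 0" using spos[OF that] wpos[OF that] by simp
    then show ?thesis using that by (simp add: algebra_simps)
  qed
  have "AE y in lborel. 0 \<le> ?f y"
  proof (rule AE_I2)
    fix y show "0 \<le> ?f y" using fpos[of y] by (cases "y \<in> \<Omega>") auto
  qed
  then have "AE y in lborel. ?f y = 0" using integral_nonneg_eq_0_iff_AE[OF fi] fz by blast
  then have "AE y in lborel. y \<notin> \<Omega>"
    by (rule AE_mp) (auto intro!: AE_I2 dest: fpos)
  then have "\<Omega> \<in> null_sets lborel" using AE_iff_null_sets[OF sO] by blast
  then show False using notnull by blast
qed


lemma zero_from_key:
  fixes \<Omega> :: "(real^'n::finite) set" and \<phi> u :: "real^'n \<Rightarrow> complex" and k :: real
  assumes bd: "bounded \<Omega>" and ld: "lipschitz_domain \<Omega>" and hs: "holder_space \<alpha> (closure \<Omega>) \<phi>"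
    and H: "H2_0 \<Omega> u" and he: "helmholtz_eq \<Omega> k u \<phi>" and k: "k \<ge> 0" and small: "k * diameter \<Omega> < pi / 2"
  shows "\<exists>z\<in>\<Omega>. Re (\<phi> z) = 0" "\<exists>z\<in>\<Omega>. Im (\<phi> z) = 0"
proof -
  have op: "open \<Omega>" and conn: "connected \<Omega>" and ne: "\<Omega> \<noteq> {}" using ld unfolding lipschitz_domain_def by auto
  have c\<phi>: "continuous_on (closure \<Omega>) \<phi>" and b\<phi>: "bounded (\<phi> ` closure \<Omega>)"
    using hs unfolding holder_space_def by auto
  have c\<phi>O: "continuous_on \<Omega> \<phi>" using continuous_on_subset[OF c\<phi> closure_subset] .
  obtain x0 where x0: "x0 \<in> \<Omega>" using ne by blast
  define i0 :: 'n where "i0 = undefined"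
  define d where "d = - k * x0 $ i0"
  define w where "w y = cos (k * y $ i0 + d)" for y :: "real^'n"
  have cw: "continuous_on UNIV w" unfolding w_def by (intro continuous_intros)
  have wpos: "w y > 0" if "y \<in> \<Omega>" for y
  proof -
    have "\<bar>y $ i0 - x0 $ i0\<bar> \<le> norm (y - x0)" using component_le_norm_cart[of "y - x0" i0] by simp
    also have "\<dots> = dist y x0" by (simp add: dist_norm)
    also have "\<dots> \<le> diameter \<Omega>" by (rule diameter_bounded_bound[OF bd that x0])
    finally have "k * \<bar>y $ i0 - x0 $ i0\<bar> \<le> k * diameter \<Omega>" using k by (intro mult_left_mono) auto
    moreover have "\<bar>k * y $ i0 + d\<bar> = k * \<bar>y $ i0 - x0 $ i0\<bar>"
      using k unfolding d_def by (simp add: abs_mult right_diff_distrib[symmetric])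
    ultimately have "\<bar>k * y $ i0 + d\<bar> < pi / 2" using small by simp
    then have "- (pi / 2) < k * y $ i0 + d" "k * y $ i0 + d < pi / 2" by linarith+
    then show ?thesis unfolding w_def by (rule cos_gt_zero_pi)
  qed
  have K: "(\<integral>y. indicator \<Omega> y *\<^sub>R (\<phi> y * of_real (w y)) \<partial>lborel) = 0"
    unfolding w_def by (rule key[OF bd ld c\<phi> b\<phi> H he])
  have I: "integrable lborel (\<lambda>y. indicator \<Omega> y *\<^sub>R (\<phi> y * of_real (w y)))"
    by (rule phi_int[OF bd op c\<phi> b\<phi> cw])
  have IR: "integrable lborel (\<lambda>y. Re (indicator \<Omega> y *\<^sub>R (\<phi> y * of_real (w y))))"
    using integrable_Re[OF I] .
  have II: "integrable lborel (\<lambda>y. Im (indicator \<Omega> y *\<^sub>R (\<phi> y * of_real (w y))))"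
    using integrable_Im[OF I] .
  have eR: "Re (indicator \<Omega> y *\<^sub>R (\<phi> y * of_real (w y))) = indicator \<Omega> y * (Re (\<phi> y) * w y)" for y
    by simp
  have eI: "Im (indicator \<Omega> y *\<^sub>R (\<phi> y * of_real (w y))) = indicator \<Omega> y * (Im (\<phi> y) * w y)" for y
    by simp
  have "(\<integral>y. Re (indicator \<Omega> y *\<^sub>R (\<phi> y * of_real (w y))) \<partial>lborel) = 0"
    using integral_Re[OF I] K by simp
  then have zR: "(\<integral>y. indicator \<Omega> y * (Re (\<phi> y) * w y) \<partial>lborel) = 0" unfolding eR .
  have "(\<integral>y. Im (indicator \<Omega> y *\<^sub>R (\<phi> y * of_real (w y))) \<partial>lborel) = 0"
    using integral_Im[OF I] K by simp
  then have zI: "(\<integral>y. indicator \<Omega> y * (Im (\<phi> y) * w y) \<partial>lborel) = 0" unfolding eI .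
  have cR: "continuous_on \<Omega> (\<lambda>y. Re (\<phi> y))" using c\<phi>O by (intro continuous_intros)
  have cI: "continuous_on \<Omega> (\<lambda>y. Im (\<phi> y))" using c\<phi>O by (intro continuous_intros)
  show "\<exists>z\<in>\<Omega>. Re (\<phi> z) = 0"
    by (rule exists_zero[OF op ne conn cR wpos _ zR]) (use IR eR in simp_all)
  show "\<exists>z\<in>\<Omega>. Im (\<phi> z) = 0"
    by (rule exists_zero[OF op ne conn cI wpos _ zI]) (use II eI in simp_all)
qed


theorem proposition2p7:
  fixes k Rm :: real
  assumes "CARD('n::finite) \<ge> 2" and "k \<ge> 0"
  shows "\<exists>C>0. \<forall>(\<Omega> :: (real^'n) set) (\<alpha>::real) \<phi> u.
     bounded \<Omega> \<and> lipschitz_domain \<Omega> \<and> diameter \<Omega> \<le> Rm \<and> 0 \<le> \<alpha> \<and> \<alpha> \<le> 1 \<and>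
     holder_space \<alpha> (closure \<Omega>) \<phi> \<and> H2_0 \<Omega> u \<and> helmholtz_eq \<Omega> k u \<phi> \<longrightarrow>
     Sup ((\<lambda>x. cmod (\<phi> x)) ` frontier \<Omega>) \<le> C * (diameter \<Omega>) powr \<alpha> * holder_norm \<alpha> (closure \<Omega>) \<phi>"
proof (intro exI[of _ "2 + 2 * k / pi"] conjI allI impI)
  have k: "k \<ge> 0" by fact
  show "0 < 2 + 2 * k / pi" using k by (simp add: add_pos_nonneg)
  fix \<Omega> :: "(real^'n) set" and \<alpha> :: real and \<phi> u
  assume A: "bounded \<Omega> \<and> lipschitz_domain \<Omega> \<and> diameter \<Omega> \<le> Rm \<and> 0 \<le> \<alpha> \<and> \<alpha> \<le> 1 \<and>
     holder_space \<alpha> (closure \<Omega>) \<phi> \<and> H2_0 \<Omega> u \<and> helmholtz_eq \<Omega> k u \<phi>"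
  then have bd: "bounded \<Omega>" and ld: "lipschitz_domain \<Omega>" and a0: "0 \<le> \<alpha>" and a1: "\<alpha> \<le> 1"
    and hs: "holder_space \<alpha> (closure \<Omega>) \<phi>" and H: "H2_0 \<Omega> u" and he: "helmholtz_eq \<Omega> k u \<phi>" by auto
  define C where "C = 2 + 2 * k / pi"
  define D where "D = diameter \<Omega>"
  define S where "S = {cmod (\<phi> x - \<phi> y) / (dist x y powr \<alpha>) | x y. x \<in> closure \<Omega> \<and> y \<in> closure \<Omega> \<and> x \<noteq> y}"
  define sem where "sem = holder_seminorm \<alpha> (closure \<Omega>) \<phi>"
  define A where "A = (\<lambda>x. cmod (\<phi> x)) ` closure \<Omega>"
  define hn where "hn = holder_norm \<alpha> (closure \<Omega>) \<phi>"
  have semS: "sem = Sup S" unfolding sem_def S_def holder_seminorm_def by simp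
  have hnd: "hn = Sup A + sem" unfolding hn_def A_def sem_def holder_norm_def by simp
  have op: "open \<Omega>" and ne: "\<Omega> \<noteq> {}" using ld unfolding lipschitz_domain_def by auto
  have c\<phi>: "continuous_on (closure \<Omega>) \<phi>" and b\<phi>: "bounded (\<phi> ` closure \<Omega>)" and bS: "bdd_above S"
    using hs unfolding holder_space_def S_def by auto
  have D0: "0 \<le> D" unfolding D_def by (rule diameter_ge_0[OF bd])
  have Dcl: "diameter (closure \<Omega>) = D" unfolding D_def by (rule diameter_closure[OF bd])
  have bdc: "bounded (closure \<Omega>)" using bd by (rule bounded_closure)
  have semb: "cmod (\<phi> x - \<phi> y) \<le> sem * D powr \<alpha>" if "x \<in> closure \<Omega>" "y \<in> closure \<Omega>" "x \<noteq> y" for x y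
  proof -
    have "cmod (\<phi> x - \<phi> y) / (dist x y powr \<alpha>) \<in> S" unfolding S_def using that by blast
    then have r: "cmod (\<phi> x - \<phi> y) / (dist x y powr \<alpha>) \<le> sem" unfolding semS by (rule cSup_upper[OF _ bS])
    have dp: "dist x y powr \<alpha> > 0" using that by simp
    have "cmod (\<phi> x - \<phi> y) \<le> sem * dist x y powr \<alpha>" using r dp by (simp add: divide_le_eq)
    also have "sem * dist x y powr \<alpha> \<le> sem * D powr \<alpha>"
    proof (rule mult_left_mono)
      have "dist x y \<le> D" using diameter_bounded_bound[OF bdc that(1,2)] Dcl by simp
      then show "dist x y powr \<alpha> \<le> D powr \<alpha>" using a0 by (intro powr_mono2) auto
      show "0 \<le> sem" using r dp by (smt (verit) divide_nonneg_pos norm_ge_zero)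
    qed
    finally show ?thesis .
  qed
  have sem0: "0 \<le> sem"
  proof -
    obtain x0 where x0: "x0 \<in> \<Omega>" using ne by blast
    obtain r where r: "r > 0" "ball x0 r \<subseteq> \<Omega>" using op x0 openE by blast
    define i0 :: 'n where "i0 = undefined"
    define y where "y = x0 + (r/2) *\<^sub>R axis i0 1"
    have "dist y x0 = r / 2" using r unfolding y_def by (simp add: dist_norm)
    then have yb: "y \<in> ball x0 r" and yx: "y \<noteq> x0" using r by (auto simp: dist_commute)
    then have "y \<in> closure \<Omega>" "x0 \<in> closure \<Omega>" using r x0 closure_subset by blast+
    then have "cmod (\<phi> y - \<phi> x0) / (dist y x0 powr \<alpha>) \<in> S" unfolding S_def using yx by blast
    then have "cmod (\<phi> y - \<phi> x0) / (dist y x0 powr \<alpha>) \<le> sem" unfolding semS by (rule cSup_upper[OF _ bS])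
    moreover have "0 \<le> cmod (\<phi> y - \<phi> x0) / (dist y x0 powr \<alpha>)" by simp
    ultimately show ?thesis by linarith
  qed
  have bA: "bdd_above A"
  proof -
    obtain B where B: "\<forall>y\<in>\<phi> ` closure \<Omega>. norm y \<le> B" using b\<phi> unfolding bounded_iff by blast
    then show ?thesis unfolding A_def bdd_above_def by auto
  qed
  have supA: "cmod (\<phi> x) \<le> Sup A" if "x \<in> closure \<Omega>" for x
    using cSup_upper[OF _ bA] that unfolding A_def by blast
  have fne: "frontier \<Omega> \<noteq> {}"
  proof (rule frontier_not_empty[OF ne])
    show "\<Omega> \<noteq> UNIV" using bd not_bounded_UNIV by blast
  qed
  have fcl: "frontier \<Omega> \<subseteq> closure \<Omega>" by (simp add: frontier_def)
  have SA0: "0 \<le> Sup A" using supA fcl fne norm_ge_zero order_trans by blast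
  have hn0: "0 \<le> hn" using hnd SA0 sem0 by simp
  have Dp0: "0 \<le> D powr \<alpha>" by simp
  have C2: "2 \<le> C" unfolding C_def using k by simp
  have bound: "cmod (\<phi> x) \<le> C * D powr \<alpha> * hn" if x: "x \<in> frontier \<Omega>" for x
  proof (cases "k * D < pi / 2")
    case True
    obtain zr where zr: "zr \<in> \<Omega>" "Re (\<phi> zr) = 0"
      using zero_from_key(1)[OF bd ld hs H he k] True unfolding D_def by blast
    obtain zi where zi: "zi \<in> \<Omega>" "Im (\<phi> zi) = 0"
      using zero_from_key(2)[OF bd ld hs H he k] True unfolding D_def by blast
    have xO: "x \<notin> \<Omega>" using x op by (simp add: frontier_def interior_open)
    have xc: "x \<in> closure \<Omega>" using x fcl by blast
    have "\<bar>Re (\<phi> x)\<bar> = \<bar>Re (\<phi> x - \<phi> zr)\<bar>" using zr by simp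
    also have "\<dots> \<le> cmod (\<phi> x - \<phi> zr)" by (rule abs_Re_le_cmod)
    also have "\<dots> \<le> sem * D powr \<alpha>" using semb[OF xc _ ] zr(1) closure_subset xO by blast
    finally have R: "\<bar>Re (\<phi> x)\<bar> \<le> sem * D powr \<alpha>" .
    have "\<bar>Im (\<phi> x)\<bar> = \<bar>Im (\<phi> x - \<phi> zi)\<bar>" using zi by simp
    also have "\<dots> \<le> cmod (\<phi> x - \<phi> zi)" by (rule abs_Im_le_cmod)
    also have "\<dots> \<le> sem * D powr \<alpha>" using semb[OF xc _ ] zi(1) closure_subset xO by blast
    finally have I: "\<bar>Im (\<phi> x)\<bar> \<le> sem * D powr \<alpha>" .
    have "cmod (\<phi> x) \<le> \<bar>Re (\<phi> x)\<bar> + \<bar>Im (\<phi> x)\<bar>" by (rule cmod_le)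
    also have "\<dots> \<le> 2 * (sem * D powr \<alpha>)" using R I by simp
    also have "\<dots> \<le> 2 * (hn * D powr \<alpha>)" using hnd SA0 Dp0 by (intro mult_left_mono mult_right_mono) auto
    also have "\<dots> \<le> C * (hn * D powr \<alpha>)" using C2 hn0 Dp0 by (intro mult_right_mono) auto
    finally show ?thesis by (simp add: algebra_simps)
  next
    case False
    then have kD: "k * D \<ge> pi / 2" by simp
    have kp: "k > 0"
    proof (rule ccontr)
      assume "\<not> k > 0"
      then have "k = 0" using k by simp
      then show False using kD pi_gt_zero by simp
    qed
    have Dk: "D \<ge> pi / (2 * k)" using kD kp by (simp add: divide_le_eq algebra_simps)
    have "pi / (2 * k) > 0" using kp by simp
    then have Dpos: "D > 0" using Dk by linarith
    have CD: "1 \<le> C * D powr \<alpha>"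
    proof (cases "D \<ge> 1")
      case True
      then have "1 \<le> D powr \<alpha>" using a0 by (rule ge_one_powr_ge_zero)
      then have "1 * 1 \<le> C * D powr \<alpha>" using C2 by (intro mult_mono) auto
      then show ?thesis by simp
    next
      case False
      have "D powr 1 \<le> D powr \<alpha>" using a1 D0 False by (intro powr_mono') auto
      then have DD: "D \<le> D powr \<alpha>" using Dpos by simp
      have "1 = (2 * k / pi) * (pi / (2 * k))" using kp by (simp add: field_simps)
      also have "\<dots> \<le> (2 * k / pi) * D" using Dk kp by (intro mult_left_mono) auto
      also have "\<dots> \<le> C * D" unfolding C_def using Dpos by (intro mult_right_mono) auto
      also have "\<dots> \<le> C * D powr \<alpha>" using DD C2 by (intro mult_left_mono) auto
      finally show ?thesis .
    qed
    have "cmod (\<phi> x) \<le> Sup A" using supA x fcl by blast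
    also have "\<dots> \<le> hn" using hnd sem0 by simp
    also have "\<dots> \<le> (C * D powr \<alpha>) * hn" using CD hn0 by (simp add: mult_le_cancel_right1)
    finally show ?thesis by simp
  qed
  show "Sup ((\<lambda>x. cmod (\<phi> x)) ` frontier \<Omega>) \<le> (2 + 2 * k / pi) * (diameter \<Omega>) powr \<alpha> * holder_norm \<alpha> (closure \<Omega>) \<phi>"
    using bound fne unfolding C_def D_def hn_def by (intro cSup_least) auto
qed


end
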